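(* For every admissible triple $(j_1,j_2,j_3)\in\mathbf J$ and every $i\in\{1,2,3\}$, $$\hat H_i\,\phi_{j_1,j_2,j_3}=(j_i+1)^2\,\phi_{j_1,j_2,j_3}.$$
   Context: A triple $(j_1,j_2,j_3)$ of nonnegative integers is admissible if $|j_1-j_2|\le j_3\le j_1+j_2$ and $j_1+j_2+j_3$ is even; $\mathbf J$ denotes the set of admissible triples. Let $\mathcal H=\mathbb C[x_{12}+x_{12}^{-1},x_{13}+x_{13}^{-1},x_{23}+x_{23}^{-1}]\subset\mathbb C[x_{12}^{\pm1},x_{13}^{\pm1},x_{23}^{\pm1}]$. For $a,b\in\{\pm1\}$ set $K_{a,b}(j_1,j_2,j_3)=ab\,\frac{(aj_1+bj_2+j_3+a+b+2)(aj_1+bj_2-j_3+a+b)}{4(j_1+1)(j_2+1)}$. The genus two Schur polynomials $(\phi_{j_1,j_2,j_3})_{(j_1,j_2,j_3)\in\mathbf J}$ are the unique family in $\mathcal H$ with $\phi_{0,0,0}=1$ such that for all admissible $(j_1,j_2,j_3)$: $(x_{12}+x_{12}^{-1})\phi_{j_1,j_2,j_3}=\sum_{a,b\in\{\pm1\}}K_{a,b}(j_1,j_2,j_3)\phi_{j_1+a,j_2+b,j_3}$, $(x_{13}+x_{13}^{-1})\phi_{j_1,j_2,j_3}=\sum_{a,b\in\{\pm1\}}K_{a,b}(j_1,j_3,j_2)\phi_{j_1+a,j_2,j_3+b}$, $(x_{23}+x_{23}^{-1})\phi_{j_1,j_2,j_3}=\sum_{a,b\in\{\pm1\}}K_{a,b}(j_2,j_3,j_1)\phi_{j_1,j_2+a,j_3+b}$,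 where $\phi$ of a non-admissible triple is interpreted as $0$. The differential operators (acting on rational functions of $x_{12},x_{13},x_{23}$; write $\partial_{ij}=\partial/\partial x_{ij}$) are $$\hat H_1=x_{12}^2\partial_{12}^2+x_{13}^2\partial_{13}^2+\frac{2(x_{12}^2+1)(x_{13}^2+1)-4x_{12}x_{13}(x_{23}+x_{23}^{-1})}{(x_{12}-x_{12}^{-1})(x_{13}-x_{13}^{-1})}\partial_{12}\partial_{13}+\frac{3x_{12}^2+1}{x_{12}-x_{12}^{-1}}\partial_{12}+\frac{3x_{13}^2+1}{x_{13}-x_{13}^{-1}}\partial_{13}+1,$$ $$\hat H_2=x_{12}^2\partial_{12}^2+x_{23}^2\partial_{23}^2+\frac{2(x_{12}^2+1)(x_{23}^2+1)-4x_{12}x_{23}(x_{13}+x_{13}^{-1})}{(x_{12}-x_{12}^{-1})(x_{23}-x_{23}^{-1})}\partial_{12}\partial_{23}+\frac{3x_{12}^2+1}{x_{12}-x_{12}^{-1}}\partial_{12}+\frac{3x_{23}^2+1}{x_{23}-x_{23}^{-1}}\partial_{23}+1,$$ $$\hat H_3=x_{13}^2\partial_{13}^2+x_{23}^2\partial_{23}^2+\frac{2(x_{13}^2+1)(x_{23}^2+1)-4x_{13}x_{23}(x_{12}+x_{12}^{-1})}{(x_{13}-x_{13}^{-1})(x_{23}-x_{23}^{-1})}\partial_{13}\partial_{23}+\frac{3x_{13}^2+1}{x_{13}-x_{13}^{-1}}\partial_{13}+\frac{3x_{23}^2+1}{x_{23}-x_{23}^{-1}}\partial_{23}+1.$$ 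*)

theory Defs
  imports "HOL-Analysis.Analysis"
begin

type_synonym fun3 = "complex \<Rightarrow> complex \<Rightarrow> complex \<Rightarrow> complex"

definition admissible :: "int \<Rightarrow> int \<Rightarrow> int \<Rightarrow> bool" where
  "admissible j1 j2 j3 \<longleftrightarrow> 0 \<le> j1 \<and> 0 \<le> j2 \<and> 0 \<le> j3 \<and>
     \<bar>j1 - j2\<bar> \<le> j3 \<and> j3 \<le> j1 + j2 \<and> even (j1 + j2 + j3)"

definition Kc :: "int \<Rightarrow> int \<Rightarrow> int \<Rightarrow> int \<Rightarrow> int \<Rightarrow> complex" where
  "Kc a b j1 j2 j3 = of_int (a * b) *
     (of_int (a*j1 + b*j2 + j3 + a + b + 2) * of_int (a*j1 + b*j2 - j3 + a + b))
     / (4 * of_int (j1 + 1) * of_int (j2 + 1))"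

definition phiz :: "(int \<Rightarrow> int \<Rightarrow> int \<Rightarrow> fun3) \<Rightarrow> int \<Rightarrow> int \<Rightarrow> int \<Rightarrow> fun3" where
  "phiz \<phi> j1 j2 j3 = (if admissible j1 j2 j3 then \<phi> j1 j2 j3 else (\<lambda>_ _ _. 0))"

definition pm :: "int set" where "pm = {-1, 1}"

text \<open>The defining recursion of genus two Schur polynomials, as an identity of
  functions on (C - {0})^3 (where the Laurent polynomials are defined).\<close>
definition schur_family :: "(int \<Rightarrow> int \<Rightarrow> int \<Rightarrow> fun3) \<Rightarrow> bool" where
  "schur_family \<phi> \<longleftrightarrow>
    (\<forall>x12 x13 x23. x12 \<noteq> 0 \<longrightarrow> x13 \<noteq> 0 \<longrightarrow> x23 \<noteq> 0 \<longrightarrow>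
      \<phi> 0 0 0 x12 x13 x23 = 1 \<and>
      (\<forall>j1 j2 j3. admissible j1 j2 j3 \<longrightarrow>
        (x12 + inverse x12) * \<phi> j1 j2 j3 x12 x13 x23 =
          (\<Sum>a\<in>pm. \<Sum>b\<in>pm. Kc a b j1 j2 j3 * phiz \<phi> (j1+a) (j2+b) j3 x12 x13 x23) \<and>
        (x13 + inverse x13) * \<phi> j1 j2 j3 x12 x13 x23 =
          (\<Sum>a\<in>pm. \<Sum>b\<in>pm. Kc a b j1 j3 j2 * phiz \<phi> (j1+a) j2 (j3+b) x12 x13 x23) \<and>
        (x23 + inverse x23) * \<phi> j1 j2 j3 x12 x13 x23 =
          (\<Sum>a\<in>pm. \<Sum>b\<in>pm. Kc a b j2 j3 j1 * phiz \<phi> j1 (j2+a) (j3+b) x12 x13 x23)))"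

definition d1 :: "fun3 \<Rightarrow> fun3" where "d1 f x y z = deriv (\<lambda>t. f t y z) x"
definition d2 :: "fun3 \<Rightarrow> fun3" where "d2 f x y z = deriv (\<lambda>t. f x t z) y"
definition d3 :: "fun3 \<Rightarrow> fun3" where "d3 f x y z = deriv (\<lambda>t. f x y t) z"

definition Hgen :: "complex \<Rightarrow> complex \<Rightarrow> complex \<Rightarrow> complex \<Rightarrow> complex \<Rightarrow> complex
     \<Rightarrow> complex \<Rightarrow> complex \<Rightarrow> complex \<Rightarrow> complex" where
  "Hgen u v w fuu fvv fuv fu fv f =
     u^2 * fuu + v^2 * fvv
     + (2 * (u^2 + 1) * (v^2 + 1) - 4 * u * v * (w + inverse w))
        / ((u - inverse u) * (v - inverse v)) * fuv
     + (3 * u^2 + 1) / (u - inverse u) * fu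
     + (3 * v^2 + 1) / (v - inverse v) * fv + f"

definition H1 :: "fun3 \<Rightarrow> fun3" where
  "H1 f x12 x13 x23 = Hgen x12 x13 x23 (d1 (d1 f) x12 x13 x23) (d2 (d2 f) x12 x13 x23)
      (d2 (d1 f) x12 x13 x23) (d1 f x12 x13 x23) (d2 f x12 x13 x23) (f x12 x13 x23)"
definition H2 :: "fun3 \<Rightarrow> fun3" where
  "H2 f x12 x13 x23 = Hgen x12 x23 x13 (d1 (d1 f) x12 x13 x23) (d3 (d3 f) x12 x13 x23)
      (d3 (d1 f) x12 x13 x23) (d1 f x12 x13 x23) (d3 f x12 x13 x23) (f x12 x13 x23)"
definition H3 :: "fun3 \<Rightarrow> fun3" where
  "H3 f x12 x13 x23 = Hgen x13 x23 x12 (d2 (d2 f) x12 x13 x23) (d3 (d3 f) x12 x13 x23)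
      (d3 (d2 f) x12 x13 x23) (d2 f x12 x13 x23) (d3 f x12 x13 x23) (f x12 x13 x23)"

definition Hhat :: "nat \<Rightarrow> fun3 \<Rightarrow> fun3" where
  "Hhat i = (if i = 1 then H1 else if i = 2 then H2 else H3)"

definition jsel :: "nat \<Rightarrow> int \<Rightarrow> int \<Rightarrow> int \<Rightarrow> int" where
  "jsel i j1 j2 j3 = (if i = 1 then j1 else if i = 2 then j2 else j3)"

end

theory Submission
  imports Defs
begin

type_synonym cf = "int \<Rightarrow> int \<Rightarrow> int \<Rightarrow> complex"
definition ms :: "cf \<Rightarrow> cf" where "ms C p q r = C (p-1) q r"
definition mt :: "cf \<Rightarrow> cf" where "mt C p q r = C p (q-1) r"
definition mu :: "cf \<Rightarrow> cf" where "mu C p q r = C p q (r-1)"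
definition sw :: "cf \<Rightarrow> cf" where "sw C p q r = C q p r"
definition Fd :: "int \<Rightarrow> cf \<Rightarrow> bool" where "Fd d C \<longleftrightarrow> (\<forall>p q r. d < p + q \<longrightarrow> C p q r = 0)"
definition nsup :: "cf \<Rightarrow> bool" where "nsup C \<longleftrightarrow> (\<forall>p q r. p < 0 \<or> q < 0 \<or> r < 0 \<longrightarrow> C p q r = 0)"
definition ind :: "bool \<Rightarrow> complex" where "ind P = (if P then 1 else 0)"
definition DD :: "cf \<Rightarrow> cf" where
 "DD C p q r = (of_int (p+q+1))^2 * C p q r - 4 * of_int((p+2)*(p+1)) * C (p+2) q r
    - 4 * of_int((q+2)*(q+1)) * C p (q+2) r - 4 * of_int((p+1)*(q+1)) * C (p+1) (q+1) (r-1)"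

definition fam :: "(int \<Rightarrow> int \<Rightarrow> int \<Rightarrow> cf) \<Rightarrow> bool" where
 "fam cj \<longleftrightarrow> (\<forall>j1 j2 j3 p q r. \<not> admissible j1 j2 j3 \<longrightarrow> cj j1 j2 j3 p q r = 0)
   \<and> (\<forall>j1 j2 j3. nsup (cj j1 j2 j3))
   \<and> (\<forall>p q r. cj 0 0 0 p q r = ind (p = 0 \<and> q = 0 \<and> r = 0))
   \<and> (\<forall>j1 j2 j3 p q r. admissible j1 j2 j3 \<longrightarrow> ms (cj j1 j2 j3) p q r =
        Kc 1 1 j1 j2 j3 * cj (j1+1) (j2+1) j3 p q r + Kc 1 (-1) j1 j2 j3 * cj (j1+1) (j2-1) j3 p q r
      + Kc (-1) 1 j1 j2 j3 * cj (j1-1) (j2+1) j3 p q r + Kc (-1) (-1) j1 j2 j3 * cj (j1-1) (j2-1) j3 p q r)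
   \<and> (\<forall>j1 j2 j3 p q r. admissible j1 j2 j3 \<longrightarrow> mt (cj j1 j2 j3) p q r =
        Kc 1 1 j1 j3 j2 * cj (j1+1) j2 (j3+1) p q r + Kc 1 (-1) j1 j3 j2 * cj (j1+1) j2 (j3-1) p q r
      + Kc (-1) 1 j1 j3 j2 * cj (j1-1) j2 (j3+1) p q r + Kc (-1) (-1) j1 j3 j2 * cj (j1-1) j2 (j3-1) p q r)
   \<and> (\<forall>j1 j2 j3 p q r. admissible j1 j2 j3 \<longrightarrow> mu (cj j1 j2 j3) p q r =
        Kc 1 1 j2 j3 j1 * cj j1 (j2+1) (j3+1) p q r + Kc 1 (-1) j2 j3 j1 * cj j1 (j2+1) (j3-1) p q r
      + Kc (-1) 1 j2 j3 j1 * cj j1 (j2-1) (j3+1) p q r + Kc (-1) (-1) j2 j3 j1 * cj j1 (j2-1) (j3-1) p q r)"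

lemma fam_na: "fam cj \<Longrightarrow> \<not> admissible j1 j2 j3 \<Longrightarrow> cj j1 j2 j3 p q r = 0"
  unfolding fam_def by simp
lemma fam_ns: "fam cj \<Longrightarrow> nsup (cj j1 j2 j3)"
  unfolding fam_def by simp
lemma fam_0: "fam cj \<Longrightarrow> cj 0 0 0 p q r = ind (p = 0 \<and> q = 0 \<and> r = 0)"
  unfolding fam_def by simp
lemma fam_s: "fam cj \<Longrightarrow> admissible j1 j2 j3 \<Longrightarrow> cj j1 j2 j3 (p-1) q r =
        Kc 1 1 j1 j2 j3 * cj (j1+1) (j2+1) j3 p q r + Kc 1 (-1) j1 j2 j3 * cj (j1+1) (j2-1) j3 p q r
      + Kc (-1) 1 j1 j2 j3 * cj (j1-1) (j2+1) j3 p q r + Kc (-1) (-1) j1 j2 j3 * cj (j1-1) (j2-1) j3 p q r"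
  unfolding fam_def ms_def by blast
lemma fam_t: "fam cj \<Longrightarrow> admissible j1 j2 j3 \<Longrightarrow> cj j1 j2 j3 p (q-1) r =
        Kc 1 1 j1 j3 j2 * cj (j1+1) j2 (j3+1) p q r + Kc 1 (-1) j1 j3 j2 * cj (j1+1) j2 (j3-1) p q r
      + Kc (-1) 1 j1 j3 j2 * cj (j1-1) j2 (j3+1) p q r + Kc (-1) (-1) j1 j3 j2 * cj (j1-1) j2 (j3-1) p q r"
  unfolding fam_def mt_def by blast
lemma fam_u: "fam cj \<Longrightarrow> admissible j1 j2 j3 \<Longrightarrow> cj j1 j2 j3 p q (r-1) =
        Kc 1 1 j2 j3 j1 * cj j1 (j2+1) (j3+1) p q r + Kc 1 (-1) j2 j3 j1 * cj j1 (j2+1) (j3-1) p q r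
      + Kc (-1) 1 j2 j3 j1 * cj j1 (j2-1) (j3+1) p q r + Kc (-1) (-1) j2 j3 j1 * cj j1 (j2-1) (j3-1) p q r"
  unfolding fam_def mu_def by blast

lemma K11_nz: "0 \<le> j1 \<Longrightarrow> 0 \<le> j2 \<Longrightarrow> 0 \<le> j3 \<Longrightarrow> j3 \<le> j1 + j2 \<Longrightarrow> Kc 1 1 j1 j2 j3 \<noteq> 0"
  unfolding Kc_def by (simp del: of_int_add of_int_mult of_int_diff)

lemma adm_induct[consumes 1, case_names 1]:
  assumes "admissible j1 j2 j3" and "\<And>j1 j2 j3. admissible j1 j2 j3 \<Longrightarrow>
     (\<And>k1 k2 k3. admissible k1 k2 k3 \<Longrightarrow> k1+k2+k3 < j1+j2+j3 \<Longrightarrow> P k1 k2 k3) \<Longrightarrow> P j1 j2 j3"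
  shows "P j1 j2 j3"
  using assms(1)
proof (induction "nat (j1+j2+j3)" arbitrary: j1 j2 j3 rule: less_induct)
  case less
  show ?case
  proof (rule assms(2)[OF less.prems])
    fix k1 k2 k3 assume "admissible k1 k2 k3" "k1+k2+k3 < j1+j2+j3"
    moreover have "nat (k1+k2+k3) < nat (j1+j2+j3)"
      using calculation unfolding admissible_def by auto
    ultimately show "P k1 k2 k3" using less.hyps by blast
  qed
qed

lemma Fd_mono: "Fd d C \<Longrightarrow> d \<le> d' \<Longrightarrow> Fd d' C"
  unfolding Fd_def by auto

lemma fam_Fd_or: "fam cj \<Longrightarrow> (admissible k1 k2 k3 \<Longrightarrow> Fd k1 (cj k1 k2 k3)) \<Longrightarrow> Fd k1 (cj k1 k2 k3)"
  unfolding Fd_def using fam_na by blast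

lemma adm_s: "admissible j1 j2 j3 \<Longrightarrow> j3 < j1 + j2 \<Longrightarrow> admissible (j1-1) (j2-1) j3"
  unfolding admissible_def by (simp add: abs_le_iff; presburger)
lemma adm_t: "admissible j1 j2 j3 \<Longrightarrow> j2 < j1 + j3 \<Longrightarrow> admissible (j1-1) j2 (j3-1)"
  unfolding admissible_def by (simp add: abs_le_iff; presburger)
lemma adm_u: "admissible j1 j2 j3 \<Longrightarrow> j1 < j2 + j3 \<Longrightarrow> admissible j1 (j2-1) (j3-1)"
  unfolding admissible_def by (simp add: abs_le_iff; presburger)
lemma adm_cases: "admissible j1 j2 j3 \<Longrightarrow> (j1 = 0 \<and> j2 = 0 \<and> j3 = 0) \<or> j3 < j1 + j2 \<or>
   (j3 = j1 + j2 \<and> 1 \<le> j1) \<or> (j1 = 0 \<and> j2 = j3 \<and> 1 \<le> j2 \<and> j1 < j2 + j3)"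
  unfolding admissible_def by (simp add: abs_le_iff; presburger)

lemma fam_deg0: "admissible j1 j2 j3 \<Longrightarrow> fam cj \<Longrightarrow> Fd j1 (cj j1 j2 j3)"
proof (induction j1 j2 j3 rule: adm_induct)
  case (1 j1 j2 j3)
  have IH: "Fd k1 (cj k1 k2 k3)" if "k1+k2+k3 < j1+j2+j3" for k1 k2 k3
    using fam_Fd_or[OF \<open>fam cj\<close>] "1.IH"[OF _ that \<open>fam cj\<close>] by blast
  from adm_cases[OF "1.hyps"] show ?case
  proof (elim disjE conjE)
    assume "j1 = 0" "j2 = 0" "j3 = 0"
    then show ?thesis using fam_0[OF \<open>fam cj\<close>] unfolding Fd_def ind_def by auto
  next
    assume lt: "j3 < j1 + j2"
    have ab: "admissible (j1-1) (j2-1) j3" using adm_s[OF "1.hyps" lt] .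
    have nz: "Kc 1 1 (j1-1) (j2-1) j3 \<noteq> 0" using ab unfolding admissible_def by (intro K11_nz) auto
    have F0: "Fd (j1-1) (cj (j1-1) (j2-1) j3)" using IH[of "j1-1" "j2-1" j3] by simp
    have F1: "Fd j1 (cj j1 (j2-2) j3)" using IH[of j1 "j2-2" j3] by simp
    have F2: "Fd (j1-2) (cj (j1-2) j2 j3)" using IH[of "j1-2" j2 j3] by simp
    have F3: "Fd (j1-2) (cj (j1-2) (j2-2) j3)" using IH[of "j1-2" "j2-2" j3] by simp
    show ?thesis unfolding Fd_def
    proof (intro allI impI)
      fix p q r assume "j1 < p + q"
      have e: "cj (j1-1) (j2-1) j3 (p-1) q r = Kc 1 1 (j1-1) (j2-1) j3 * cj j1 j2 j3 p q r
        + Kc 1 (-1) (j1-1) (j2-1) j3 * cj j1 (j2-2) j3 p q r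
        + Kc (-1) 1 (j1-1) (j2-1) j3 * cj (j1-2) j2 j3 p q r
        + Kc (-1) (-1) (j1-1) (j2-1) j3 * cj (j1-2) (j2-2) j3 p q r"
        using fam_s[OF \<open>fam cj\<close> ab, of p q r] by (simp add: algebra_simps)
      have "cj (j1-1) (j2-1) j3 (p-1) q r = 0" "cj j1 (j2-2) j3 p q r = 0"
        "cj (j1-2) j2 j3 p q r = 0" "cj (j1-2) (j2-2) j3 p q r = 0"
        using F0 F1 F2 F3 \<open>j1 < p + q\<close> unfolding Fd_def by auto
      with e nz show "cj j1 j2 j3 p q r = 0" by simp
    qed
  next
    assume eq: "j3 = j1 + j2" and "1 \<le> j1"
    have lt: "j2 < j1 + j3" using eq \<open>1 \<le> j1\<close> by simp
    have ab: "admissible (j1-1) j2 (j3-1)" using adm_t[OF "1.hyps" lt] .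
    have nz: "Kc 1 1 (j1-1) (j3-1) j2 \<noteq> 0" using ab unfolding admissible_def by (intro K11_nz) auto
    have F0: "Fd (j1-1) (cj (j1-1) j2 (j3-1))" using IH[of "j1-1" j2 "j3-1"] by simp
    have F1: "Fd j1 (cj j1 j2 (j3-2))" using IH[of j1 j2 "j3-2"] by simp
    have F2: "Fd (j1-2) (cj (j1-2) j2 j3)" using IH[of "j1-2" j2 j3] by simp
    have F3: "Fd (j1-2) (cj (j1-2) j2 (j3-2))" using IH[of "j1-2" j2 "j3-2"] by simp
    show ?thesis unfolding Fd_def
    proof (intro allI impI)
      fix p q r assume "j1 < p + q"
      have e: "cj (j1-1) j2 (j3-1) p (q-1) r = Kc 1 1 (j1-1) (j3-1) j2 * cj j1 j2 j3 p q r
        + Kc 1 (-1) (j1-1) (j3-1) j2 * cj j1 j2 (j3-2) p q r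
        + Kc (-1) 1 (j1-1) (j3-1) j2 * cj (j1-2) j2 j3 p q r
        + Kc (-1) (-1) (j1-1) (j3-1) j2 * cj (j1-2) j2 (j3-2) p q r"
        using fam_t[OF \<open>fam cj\<close> ab, of p q r] by (simp add: algebra_simps)
      have "cj (j1-1) j2 (j3-1) p (q-1) r = 0" "cj j1 j2 (j3-2) p q r = 0"
        "cj (j1-2) j2 j3 p q r = 0" "cj (j1-2) j2 (j3-2) p q r = 0"
        using F0 F1 F2 F3 \<open>j1 < p + q\<close> unfolding Fd_def by auto
      with e nz show "cj j1 j2 j3 p q r = 0" by simp
    qed
  next
    assume "j1 = 0" "j2 = j3" "1 \<le> j2" and lt: "j1 < j2 + j3"
    have ab: "admissible j1 (j2-1) (j3-1)" using adm_u[OF "1.hyps" lt] .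
    have nz: "Kc 1 1 (j2-1) (j3-1) j1 \<noteq> 0" using ab unfolding admissible_def by (intro K11_nz) auto
    have F0: "Fd j1 (cj j1 (j2-1) (j3-1))" using IH[of j1 "j2-1" "j3-1"] by simp
    have F1: "Fd j1 (cj j1 j2 (j3-2))" using IH[of j1 j2 "j3-2"] by simp
    have F2: "Fd j1 (cj j1 (j2-2) j3)" using IH[of j1 "j2-2" j3] by simp
    have F3: "Fd j1 (cj j1 (j2-2) (j3-2))" using IH[of j1 "j2-2" "j3-2"] by simp
    show ?thesis unfolding Fd_def
    proof (intro allI impI)
      fix p q r assume "j1 < p + q"
      have e: "cj j1 (j2-1) (j3-1) p q (r-1) = Kc 1 1 (j2-1) (j3-1) j1 * cj j1 j2 j3 p q r
        + Kc 1 (-1) (j2-1) (j3-1) j1 * cj j1 j2 (j3-2) p q r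
        + Kc (-1) 1 (j2-1) (j3-1) j1 * cj j1 (j2-2) j3 p q r
        + Kc (-1) (-1) (j2-1) (j3-1) j1 * cj j1 (j2-2) (j3-2) p q r"
        using fam_u[OF \<open>fam cj\<close> ab, of p q r] by (simp add: algebra_simps)
      have "cj j1 (j2-1) (j3-1) p q (r-1) = 0" "cj j1 j2 (j3-2) p q r = 0"
        "cj j1 (j2-2) j3 p q r = 0" "cj j1 (j2-2) (j3-2) p q r = 0"
        using F0 F1 F2 F3 \<open>j1 < p + q\<close> unfolding Fd_def by auto
      with e nz show "cj j1 j2 j3 p q r = 0" by simp
    qed
  qed
qed

lemma fam_deg: "fam cj \<Longrightarrow> Fd j1 (cj j1 j2 j3)"
  using fam_deg0 fam_Fd_or by blast

lemma cnz: "(x::int) \<noteq> 0 \<Longrightarrow> (of_int x :: complex) \<noteq> 0" by simp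

lemma mdiv: "(x::complex) \<noteq> 0 \<Longrightarrow> x * (y / x) = y" by simp

lemma Kc_mul: "j1 \<noteq> -1 \<Longrightarrow> j2 \<noteq> -1 \<Longrightarrow> of_int (4*(j1+1)*(j2+1)) * Kc a b j1 j2 j3
   = of_int (a*b*(a*j1+b*j2+j3+a+b+2)*(a*j1+b*j2-j3+a+b))"
proof -
  assume h: "j1 \<noteq> -1" "j2 \<noteq> -1"
  have d: "(of_int (4*(j1+1)*(j2+1)) :: complex) = 4 * of_int (j1+1) * of_int (j2+1)"
    by (simp only: of_int_mult of_int_numeral)
  have nz: "(4 * of_int (j1+1) * of_int (j2+1) :: complex) \<noteq> 0"
    using h by (simp del: of_int_add of_int_mult of_int_diff)
  show ?thesis unfolding Kc_def d mdiv[OF nz] by (simp only: of_int_mult mult.assoc)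
qed

lemma fam_T0: "fam cj \<Longrightarrow> 0 \<le> b \<Longrightarrow> 0 \<le> c \<Longrightarrow> p + q = b + c \<Longrightarrow>
   of_int (b+c+1) * cj (b+c) c b p q r = ind (p = c \<and> q = b \<and> r = 0)"
proof (induction "nat (b+c)" arbitrary: b c p q r rule: less_induct)
  case less
  have fam: "fam cj" by fact
  consider "b = 0 \<and> c = 0" | "1 \<le> c" | "c = 0 \<and> 1 \<le> b" using less.prems by linarith
  then show ?case
  proof cases
    case 1 then show ?thesis using fam_0[OF fam] by simp
  next
    case 2
    have ab: "admissible (b+c-1) (c-1) b" unfolding admissible_def using 2 less.prems by (simp add: abs_le_iff; presburger)
    have e: "cj (b+c-1) (c-1) b (p-1) q r = Kc 1 1 (b+c-1) (c-1) b * cj (b+c) c b p q r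
       + Kc 1 (-1) (b+c-1) (c-1) b * cj (b+c) (c-2) b p q r
       + Kc (-1) 1 (b+c-1) (c-1) b * cj (b+c-2) c b p q r
       + Kc (-1) (-1) (b+c-1) (c-1) b * cj (b+c-2) (c-2) b p q r"
      using fam_s[OF fam ab, of p q r] by (simp add: algebra_simps)
    have z1: "cj (b+c) (c-2) b p q r = 0"
      by (rule fam_na[OF fam]) (use less.prems in \<open>simp add: admissible_def abs_le_iff\<close>)
    have z2: "cj (b+c-2) c b p q r = 0" "cj (b+c-2) (c-2) b p q r = 0"
      using fam_deg[OF fam, of "b+c-2" c b] fam_deg[OF fam, of "b+c-2" "c-2" b] less.prems
      unfolding Fd_def by auto
    have ih: "of_int (b+(c-1)+1) * cj (b+(c-1)) (c-1) b (p-1) q r = ind (p-1 = c-1 \<and> q = b \<and> r = 0)"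
      by (rule less.hyps) (use less.prems 2 in auto)
    have ih': "of_int (b+c) * cj (b+c-1) (c-1) b (p-1) q r = ind (p = c \<and> q = b \<and> r = 0)"
      using ih by (simp add: algebra_simps)
    have K: "of_int (4*(b+c-1+1)*(c-1+1)) * Kc 1 1 (b+c-1) (c-1) b
      = of_int (1*1*(1*(b+c-1)+1*(c-1)+b+1+1+2)*(1*(b+c-1)+1*(c-1)-b+1+1))"
      by (rule Kc_mul) (use 2 less.prems in auto)
    have "of_int (4*c) * (of_int (b+c+1) * cj (b+c) c b p q r) = of_int (4*c) * ind (p = c \<and> q = b \<and> r = 0)"
      using e z1 z2 ih' K unfolding of_int_mult of_int_add of_int_diff of_int_1 of_int_0 of_int_numeral by algebra
    then show ?thesis using 2 by simp
  next
    case 3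
    have ab: "admissible (b-1) 0 (b-1)" unfolding admissible_def using 3 less.prems by simp
    have e: "cj (b-1) 0 (b-1) p (q-1) r = Kc 1 1 (b-1) (b-1) 0 * cj b 0 b p q r
       + Kc 1 (-1) (b-1) (b-1) 0 * cj b 0 (b-2) p q r
       + Kc (-1) 1 (b-1) (b-1) 0 * cj (b-2) 0 b p q r
       + Kc (-1) (-1) (b-1) (b-1) 0 * cj (b-2) 0 (b-2) p q r"
      using fam_t[OF fam ab, of p q r] by (simp add: algebra_simps)
    have z1: "cj b 0 (b-2) p q r = 0" "cj (b-2) 0 b p q r = 0"
      by (rule fam_na[OF fam], use less.prems in \<open>simp add: admissible_def abs_le_iff\<close>)+
    have z2: "cj (b-2) 0 (b-2) p q r = 0"
      using fam_deg[OF fam, of "b-2" 0 "b-2"] less.prems 3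
      unfolding Fd_def by auto
    have ih: "of_int ((b-1)+0+1) * cj ((b-1)+0) 0 (b-1) p (q-1) r = ind (p = 0 \<and> q-1 = b-1 \<and> r = 0)"
      by (rule less.hyps) (use less.prems 3 in auto)
    have ih': "of_int b * cj (b-1) 0 (b-1) p (q-1) r = ind (p = 0 \<and> q = b \<and> r = 0)"
      using ih by (simp add: algebra_simps)
    have K: "of_int (4*(b-1+1)*(b-1+1)) * Kc 1 1 (b-1) (b-1) 0
      = of_int (1*1*(1*(b-1)+1*(b-1)+0+1+1+2)*(1*(b-1)+1*(b-1)-0+1+1))"
      by (rule Kc_mul) (use 3 less.prems in auto)
    have "of_int (4*b) * (of_int (b+1) * cj b 0 b p q r) = of_int (4*b) * ind (p = 0 \<and> q = b \<and> r = 0)"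
      using e z1 z2 ih' K unfolding of_int_mult of_int_add of_int_diff of_int_1 of_int_0 of_int_numeral by algebra
    then show ?thesis using 3 by simp
  qed
qed

lemmas ofi = of_int_mult of_int_add of_int_diff of_int_1 of_int_0 of_int_numeral of_int_minus of_int_power

lemma cancelc: "(k::complex) \<noteq> 0 \<Longrightarrow> k * a = k * b \<Longrightarrow> a = b" by simp

lemma ind_cong: "P = Q \<Longrightarrow> ind P = ind Q" by simp

lemma adm_pos: "admissible j1 j2 j3 \<Longrightarrow> 0 \<le> j1 \<and> 0 \<le> j2 \<and> 0 \<le> j3"
  unfolding admissible_def by auto

lemma fam_T1: "fam cj \<Longrightarrow> 0 \<le> b \<Longrightarrow> 0 \<le> c \<Longrightarrow> p + q = b + c \<Longrightarrow>
  of_int ((b+c+2)*(b+c+1)) * cj (b+c) (c+1) (b+1) p q r =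
  of_int ((c+1)*(b+1)) * ind (p = c \<and> q = b \<and> r = 1) - of_int (b*(c+1)) * ind (p = c+1 \<and> q = b-1 \<and> r = 0)
  - of_int (c*(b+1)) * ind (p = c-1 \<and> q = b+1 \<and> r = 0)"
proof -
  assume fam: "fam cj" and b: "0 \<le> b" and c: "0 \<le> c" and pq: "p + q = b + c"
  have ab: "admissible (b+c) c b" unfolding admissible_def using b c by simp
  have e: "cj (b+c) c b p q (r-1) = Kc 1 1 c b (b+c) * cj (b+c) (c+1) (b+1) p q r
     + Kc 1 (-1) c b (b+c) * cj (b+c) (c+1) (b-1) p q r
     + Kc (-1) 1 c b (b+c) * cj (b+c) (c-1) (b+1) p q r
     + Kc (-1) (-1) c b (b+c) * cj (b+c) (c-1) (b-1) p q r"
    using fam_u[OF fam ab, of p q r] by simp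
  have z: "cj (b+c) (c-1) (b-1) p q r = 0"
    by (rule fam_na[OF fam]) (use b in \<open>simp add: admissible_def abs_le_iff\<close>)
  have t0: "of_int (b+c+1) * cj (b+c) c b p q (r-1) = ind (p = c \<and> q = b \<and> r = 1)"
    using fam_T0[OF fam b c pq, of "r-1"] by simp
  have t1: "of_int (b+c+1) * (Kc 1 (-1) c b (b+c) * cj (b+c) (c+1) (b-1) p q r)
      = Kc 1 (-1) c b (b+c) * ind (p = c+1 \<and> q = b-1 \<and> r = 0)"
  proof (cases "b = 0")
    case True then show ?thesis by (simp add: Kc_def)
  next
    case False
    have "of_int ((b-1)+(c+1)+1) * cj ((b-1)+(c+1)) (c+1) (b-1) p q r = ind (p = c+1 \<and> q = b-1 \<and> r = 0)"
      by (rule fam_T0[OF fam]) (use b c pq False in auto)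
    moreover have "(b-1)+(c+1)+1 = b+c+1" "(b-1)+(c+1) = b+c" by simp_all
    ultimately have "of_int (b+c+1) * cj (b+c) (c+1) (b-1) p q r = ind (p = c+1 \<and> q = b-1 \<and> r = 0)"
      by (simp only:)
    then show ?thesis by (metis mult.left_commute)
  qed
  have t2: "of_int (b+c+1) * (Kc (-1) 1 c b (b+c) * cj (b+c) (c-1) (b+1) p q r)
      = Kc (-1) 1 c b (b+c) * ind (p = c-1 \<and> q = b+1 \<and> r = 0)"
  proof (cases "c = 0")
    case True then show ?thesis by (simp add: Kc_def)
  next
    case False
    have "of_int ((b+1)+(c-1)+1) * cj ((b+1)+(c-1)) (c-1) (b+1) p q r = ind (p = c-1 \<and> q = b+1 \<and> r = 0)"
      by (rule fam_T0[OF fam]) (use b c pq False in auto)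
    moreover have "(b+1)+(c-1)+1 = b+c+1" "(b+1)+(c-1) = b+c" by simp_all
    ultimately have "of_int (b+c+1) * cj (b+c) (c-1) (b+1) p q r = ind (p = c-1 \<and> q = b+1 \<and> r = 0)"
      by (simp only:)
    then show ?thesis by (metis mult.left_commute)
  qed
  have K1: "of_int (4*(c+1)*(b+1)) * Kc 1 1 c b (b+c) = of_int (1*1*(1*c+1*b+(b+c)+1+1+2)*(1*c+1*b-(b+c)+1+1))"
    by (rule Kc_mul) (use b c in auto)
  have K2: "of_int (4*(c+1)*(b+1)) * Kc 1 (-1) c b (b+c) = of_int (1*(-1)*(1*c+(-1)*b+(b+c)+1+(-1)+2)*(1*c+(-1)*b-(b+c)+1+(-1)))"
    by (rule Kc_mul) (use b c in auto)
  have K3: "of_int (4*(c+1)*(b+1)) * Kc (-1) 1 c b (b+c) = of_int ((-1)*1*((-1)*c+1*b+(b+c)+(-1)+1+2)*((-1)*c+1*b-(b+c)+(-1)+1))"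
    by (rule Kc_mul) (use b c in auto)
  have "4 * (of_int ((b+c+2)*(b+c+1)) * cj (b+c) (c+1) (b+1) p q r) = 4 * (
    of_int ((c+1)*(b+1)) * ind (p = c \<and> q = b \<and> r = 1) - of_int (b*(c+1)) * ind (p = c+1 \<and> q = b-1 \<and> r = 0)
    - of_int (c*(b+1)) * ind (p = c-1 \<and> q = b+1 \<and> r = 0))"
    using e z t0 t1 t2 K1 K2 K3 unfolding ofi by algebra
  then show ?thesis by (rule cancelc[rotated]) simp
qed

lemma S2: "Fd (b+c) C \<Longrightarrow> (\<And>p q r. DD C p q r = of_int((b+c+1)^2) * C p q r)
  \<Longrightarrow> (\<And>p q r. p+q = b+c \<Longrightarrow> of_int(b+c+1) * C p q r = ind (p = c \<and> q = b \<and> r = 0))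
  \<Longrightarrow> p+q = b+c-2 \<Longrightarrow> of_int(4*(b+c)*(b+c+1)) * C p q r =
   - of_int(4*c*(c-1)) * ind(p = c-2 \<and> q = b \<and> r = 0) - of_int(4*b*(b-1)) * ind(p = c \<and> q = b-2 \<and> r=0)
   - of_int(4*c*b) * ind(p=c-1 \<and> q=b-1 \<and> r=1)"
proof -
  assume F: "Fd (b+c) C" and E: "\<And>p q r. DD C p q r = of_int((b+c+1)^2) * C p q r"
    and T: "\<And>p q r. p+q = b+c \<Longrightarrow> of_int(b+c+1) * C p q r = ind (p = c \<and> q = b \<and> r = 0)"
    and pq: "p+q = b+c-2"
  have d: "of_int (p+q+1) ^ 2 * C p q r - 4 * of_int ((p+2)*(p+1)) * C (p+2) q r
    - 4 * of_int ((q+2)*(q+1)) * C p (q+2) r - 4 * of_int ((p+1)*(q+1)) * C (p+1) (q+1) (r-1)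
    = of_int((b+c+1)^2) * C p q r" using E[of p q r] unfolding DD_def .
  have h1: "of_int(b+c+1) * (of_int ((p+2)*(p+1)) * C (p+2) q r) = of_int (c*(c-1)) * ind(p = c-2 \<and> q = b \<and> r = 0)"
  proof -
    have "of_int(b+c+1) * C (p+2) q r = ind (p+2 = c \<and> q = b \<and> r = 0)" using T pq by simp
    then show ?thesis by (auto simp: ind_def algebra_simps)
  qed
  have h2: "of_int(b+c+1) * (of_int ((q+2)*(q+1)) * C p (q+2) r) = of_int (b*(b-1)) * ind(p = c \<and> q = b-2 \<and> r = 0)"
  proof -
    have "of_int(b+c+1) * C p (q+2) r = ind (p = c \<and> q+2 = b \<and> r = 0)" using T pq by simp
    then show ?thesis by (auto simp: ind_def algebra_simps)
  qed
  have h3: "of_int(b+c+1) * (of_int ((p+1)*(q+1)) * C (p+1) (q+1) (r-1)) = of_int (c*b) * ind(p = c-1 \<and> q = b-1 \<and> r = 1)"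
  proof -
    have "of_int(b+c+1) * C (p+1) (q+1) (r-1) = ind (p+1 = c \<and> q+1 = b \<and> r-1 = 0)" using T pq by simp
    then show ?thesis by (auto simp: ind_def algebra_simps)
  qed
  have pq': "of_int p + of_int q = (of_int b + of_int c - 2 :: complex)" using pq
    by (metis of_int_add of_int_diff of_int_numeral)
  have "of_int(4*(b+c)*(b+c+1)) * C p q r = - of_int(4*c*(c-1)) * ind(p = c-2 \<and> q = b \<and> r = 0)
    - of_int(4*b*(b-1)) * ind(p = c \<and> q = b-2 \<and> r=0) - of_int(4*c*b) * ind(p=c-1 \<and> q=b-1 \<and> r=1)"
    using d h1 h2 h3 pq' unfolding ofi by algebra
  then show ?thesis .
qed

definition eig :: "(int \<Rightarrow> int \<Rightarrow> int \<Rightarrow> cf) \<Rightarrow> int \<Rightarrow> int \<Rightarrow> int \<Rightarrow> bool" where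
  "eig cj j1 j2 j3 \<longleftrightarrow> (\<forall>p q r. DD (cj j1 j2 j3) p q r = of_int ((j1+1)^2) * cj j1 j2 j3 p q r)"

lemma DD_lin3: "DD (\<lambda>p q r. a * X p q r + b * Y p q r + c * W p q r) p q r
   = a * DD X p q r + b * DD Y p q r + c * DD W p q r"
  unfolding DD_def by (simp add: algebra_simps)
lemma DD_lin4: "DD (\<lambda>p q r. a * X p q r + b * Y p q r + c * W p q r + d * V p q r) p q r
   = a * DD X p q r + b * DD Y p q r + c * DD W p q r + d * DD V p q r"
  unfolding DD_def by (simp add: algebra_simps)
lemma DD_lin2: "DD (\<lambda>p q r. a * X p q r + b * Y p q r) p q r = a * DD X p q r + b * DD Y p q r"
  unfolding DD_def by (simp add: algebra_simps)
lemma DD_scal: "DD (\<lambda>p q r. a * X p q r) p q r = a * DD X p q r"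
  unfolding DD_def by (simp add: algebra_simps)
lemma DD_mu: "DD (mu X) p q r = DD X p q (r-1)"
  unfolding DD_def mu_def by simp
lemma DD_ms_eq: "(\<And>p q r. X p q r = Y p q r) \<Longrightarrow> DD X = DD Y"
  by (rule arg_cong[where f=DD]) (simp add: fun_eq_iff)
lemma DD_sw: "DD (sw X) p q r = DD X q p r"
  unfolding DD_def sw_def by (simp add: algebra_simps)
lemma DD_top: "Fd d X \<Longrightarrow> p + q = d \<Longrightarrow> DD X p q r = of_int((d+1)^2) * X p q r"
  unfolding DD_def Fd_def by simp
lemma DD_Fd: "Fd d X \<Longrightarrow> Fd d (DD X)"
  unfolding DD_def Fd_def by simp
lemma DD_ns: "nsup X \<Longrightarrow> nsup (DD X)"
  unfolding nsup_def
proof (intro allI impI)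
  fix p q r :: int assume X: "\<forall>p q r. p < 0 \<or> q < 0 \<or> r < 0 \<longrightarrow> X p q r = 0" and h: "p < 0 \<or> q < 0 \<or> r < 0"
  have a: "of_int((p+2)*(p+1)) * X (p+2) q r = 0"
  proof (cases "p < -2 \<or> q < 0 \<or> r < 0")
    case True then show ?thesis using X by auto
  next
    case False then have "p = -1 \<or> p = -2" using h by auto
    then show ?thesis by auto
  qed
  have b: "of_int((q+2)*(q+1)) * X p (q+2) r = 0"
  proof (cases "q < -2 \<or> p < 0 \<or> r < 0")
    case True then show ?thesis using X by auto
  next
    case False then have "q = -1 \<or> q = -2" using h by auto
    then show ?thesis by auto
  qed
  have c: "of_int((p+1)*(q+1)) * X (p+1) (q+1) (r-1) = 0"
  proof (cases "p < -1 \<or> q < -1 \<or> r < 1")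
    case True then show ?thesis using X by auto
  next
    case False then have "p = -1 \<or> q = -1" using h by auto
    then show ?thesis by auto
  qed
  have d: "X p q r = 0" using X h by auto
  show "DD X p q r = 0" unfolding DD_def mult.assoc a b c d by simp
qed

lemma QR: "DD (DD (ms C)) p q r - 2 * DD (ms (DD C)) p q r + ms (DD (DD C)) p q r
   - 2 * DD (ms C) p q r - 2 * ms (DD C) p q r + ms C p q r = 0"
  unfolding DD_def ms_def
  by (simp add: algebra_simps power2_eq_square)

lemma Fd_down: "Fd d X \<Longrightarrow> (\<And>p q r. DD X p q r = \<mu> * X p q r) \<Longrightarrow> of_int((d+1)^2) \<noteq> \<mu> \<Longrightarrow> Fd (d-1) X"
  unfolding Fd_def
proof (intro allI impI)
  fix p q r :: int assume F: "\<forall>p q r. d < p + q \<longrightarrow> X p q r = 0" and E: "\<And>p q r. DD X p q r = \<mu> * X p q r"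
    and ne: "of_int((d+1)^2) \<noteq> \<mu>" and lt: "d - 1 < p + q"
  show "X p q r = 0"
  proof (cases "p + q = d")
    case True
    have "DD X p q r = of_int((d+1)^2) * X p q r" by (rule DD_top) (use F True in \<open>auto simp: Fd_def\<close>)
    then show ?thesis using E[of p q r] ne by auto
  next
    case False then show ?thesis using F lt by auto
  qed
qed

lemma vanish: "nsup X \<Longrightarrow> Fd d X \<Longrightarrow> (\<And>p q r. DD X p q r = \<mu> * X p q r)
  \<Longrightarrow> (\<And>k. 0 \<le> k \<Longrightarrow> k \<le> d \<Longrightarrow> of_int((k+1)^2) \<noteq> \<mu>) \<Longrightarrow> X p q r = 0"
proof (induction "nat (d+1)" arbitrary: d rule: less_induct)
  case less
  show ?case
  proof (cases "d < 0")
    case True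
    then show ?thesis using less.prems(1,2) unfolding nsup_def Fd_def
      by (cases "p < 0 \<or> q < 0") auto
  next
    case False
    have "Fd (d-1) X" by (rule Fd_down[OF less.prems(2,3)]) (use less.prems(4) False in auto)
    then show ?thesis using less.hyps[of "d-1"] less.prems False by auto
  qed
qed

lemma eig_na: "fam cj \<Longrightarrow> \<not> admissible k1 k2 k3 \<Longrightarrow> eig cj k1 k2 k3"
  unfolding eig_def DD_def by (simp add: fam_na)

lemma step_u:
  assumes fam: "fam cj" and adm: "admissible j1 j2 j3" and lt: "j1 < j2 + j3"
    and IH: "\<And>k1 k2 k3. k1+k2+k3 < j1+j2+j3 \<Longrightarrow> eig cj k1 k2 k3"
  shows "eig cj j1 j2 j3"
proof -
  have ab: "admissible j1 (j2-1) (j3-1)" using adm_u[OF adm lt] .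
  define K1 where "K1 = Kc 1 1 (j2-1) (j3-1) j1"
  define K2 where "K2 = Kc 1 (-1) (j2-1) (j3-1) j1"
  define K3 where "K3 = Kc (-1) 1 (j2-1) (j3-1) j1"
  define K4 where "K4 = Kc (-1) (-1) (j2-1) (j3-1) j1"
  define Cb where "Cb = cj j1 (j2-1) (j3-1)"
  define Y1 where "Y1 = cj j1 j2 (j3-2)"
  define Y2 where "Y2 = cj j1 (j2-2) j3"
  define Y3 where "Y3 = cj j1 (j2-2) (j3-2)"
  have nz: "K1 \<noteq> 0" unfolding K1_def using ab unfolding admissible_def by (intro K11_nz) auto
  have e: "Cb p q (r-1) = K1 * cj j1 j2 j3 p q r + K2 * Y1 p q r + K3 * Y2 p q r + K4 * Y3 p q r" for p q r
    using fam_u[OF fam ab, of p q r] unfolding K1_def K2_def K3_def K4_def Cb_def Y1_def Y2_def Y3_def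
    by (simp add: algebra_simps)
  define F where "F = (\<lambda>p q r. inverse K1 * mu Cb p q r + (- inverse K1 * K2) * Y1 p q r
     + (- inverse K1 * K3) * Y2 p q r + (- inverse K1 * K4) * Y3 p q r)"
  have X: "cj j1 j2 j3 = F"
    by (intro ext) (simp add: F_def mu_def e nz field_simps)
  have E: "eig cj j1 (j2-1) (j3-1)" "eig cj j1 j2 (j3-2)" "eig cj j1 (j2-2) j3" "eig cj j1 (j2-2) (j3-2)"
    using IH by auto
  show ?thesis unfolding eig_def
  proof (intro allI)
    fix p q r
    have "DD (cj j1 j2 j3) p q r = DD F p q r" by (simp add: X)
    also have "\<dots> = inverse K1 * DD (mu Cb) p q r + (- inverse K1 * K2) * DD Y1 p q r
       + (- inverse K1 * K3) * DD Y2 p q r + (- inverse K1 * K4) * DD Y3 p q r"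
      unfolding F_def by (rule DD_lin4)
    also have "\<dots> = of_int ((j1+1)^2) * F p q r"
      using E unfolding eig_def DD_mu F_def mu_def Cb_def Y1_def Y2_def Y3_def by (simp add: algebra_simps)
    finally show "DD (cj j1 j2 j3) p q r = of_int ((j1+1)^2) * cj j1 j2 j3 p q r" by (simp add: X)
  qed
qed

definition swf :: "(int \<Rightarrow> int \<Rightarrow> int \<Rightarrow> cf) \<Rightarrow> (int \<Rightarrow> int \<Rightarrow> int \<Rightarrow> cf)" where
  "swf cj j1 j2 j3 = sw (cj j1 j3 j2)"

lemma adm_sym23: "admissible j1 j3 j2 = admissible j1 j2 j3"
  unfolding admissible_def by (auto simp: abs_le_iff algebra_simps)

lemma Kc_sym: "Kc a b x y z = Kc b a y x z"
  unfolding Kc_def by (simp add: algebra_simps)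

lemma fam_sw: "fam cj \<Longrightarrow> fam (swf cj)"
proof -
  assume f: "fam cj"
  show ?thesis unfolding fam_def
  proof (intro conjI allI impI)
    fix j1 j2 j3 p q r assume "\<not> admissible j1 j2 j3"
    then show "swf cj j1 j2 j3 p q r = 0" by (simp add: swf_def sw_def adm_sym23 fam_na[OF f])
  next
    fix j1 j2 j3 show "nsup (swf cj j1 j2 j3)"
      using fam_ns[OF f, of j1 j3 j2] unfolding nsup_def swf_def sw_def by blast
  next
    fix p q r show "swf cj 0 0 0 p q r = ind (p = 0 \<and> q = 0 \<and> r = 0)"
      by (simp add: swf_def sw_def fam_0[OF f] ind_def conj_commute)
  next
    fix j1 j2 j3 p q r assume a: "admissible j1 j2 j3"
    show "ms (swf cj j1 j2 j3) p q r =
        Kc 1 1 j1 j2 j3 * swf cj (j1+1) (j2+1) j3 p q r + Kc 1 (-1) j1 j2 j3 * swf cj (j1+1) (j2-1) j3 p q r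
      + Kc (-1) 1 j1 j2 j3 * swf cj (j1-1) (j2+1) j3 p q r + Kc (-1) (-1) j1 j2 j3 * swf cj (j1-1) (j2-1) j3 p q r"
      using fam_t[OF f, of j1 j3 j2 q p r] a by (simp add: swf_def sw_def ms_def adm_sym23)
  next
    fix j1 j2 j3 p q r assume a: "admissible j1 j2 j3"
    show "mt (swf cj j1 j2 j3) p q r =
        Kc 1 1 j1 j3 j2 * swf cj (j1+1) j2 (j3+1) p q r + Kc 1 (-1) j1 j3 j2 * swf cj (j1+1) j2 (j3-1) p q r
      + Kc (-1) 1 j1 j3 j2 * swf cj (j1-1) j2 (j3+1) p q r + Kc (-1) (-1) j1 j3 j2 * swf cj (j1-1) j2 (j3-1) p q r"
      using fam_s[OF f, of j1 j3 j2 q p r] a by (simp add: swf_def sw_def mt_def adm_sym23)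
  next
    fix j1 j2 j3 p q r assume a: "admissible j1 j2 j3"
    show "mu (swf cj j1 j2 j3) p q r =
        Kc 1 1 j2 j3 j1 * swf cj j1 (j2+1) (j3+1) p q r + Kc 1 (-1) j2 j3 j1 * swf cj j1 (j2+1) (j3-1) p q r
      + Kc (-1) 1 j2 j3 j1 * swf cj j1 (j2-1) (j3+1) p q r + Kc (-1) (-1) j2 j3 j1 * swf cj j1 (j2-1) (j3-1) p q r"
      using fam_u[OF f, of j1 j3 j2 q p r] a
      by (simp add: swf_def sw_def mu_def adm_sym23 Kc_sym[of 1 1 j3 j2 j1] Kc_sym[of 1 "-1" j3 j2 j1]
          Kc_sym[of "-1" 1 j3 j2 j1] Kc_sym[of "-1" "-1" j3 j2 j1] add_ac)
  qed
qed

lemma Gtop: "(\<And>p q r. p+q = b+c \<Longrightarrow> of_int(b+c+1) * C p q r = ind (p = c \<and> q = b \<and> r = 0))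
  \<Longrightarrow> p+q = b+c-2 \<Longrightarrow> of_int(b+c+1) * (DD C p q r - of_int((b+c+1)^2) * C p q r) =
   - of_int(4*(b+c)*(b+c+1)) * C p q r
   - of_int(4*c*(c-1)) * ind(p = c-2 \<and> q = b \<and> r = 0) - of_int(4*b*(b-1)) * ind(p = c \<and> q = b-2 \<and> r=0)
   - of_int(4*c*b) * ind(p=c-1 \<and> q=b-1 \<and> r=1)"
proof -
  assume T: "\<And>p q r. p+q = b+c \<Longrightarrow> of_int(b+c+1) * C p q r = ind (p = c \<and> q = b \<and> r = 0)"
    and pq: "p+q = b+c-2"
  have d: "DD C p q r = of_int (p+q+1) ^ 2 * C p q r - 4 * of_int ((p+2)*(p+1)) * C (p+2) q r
    - 4 * of_int ((q+2)*(q+1)) * C p (q+2) r - 4 * of_int ((p+1)*(q+1)) * C (p+1) (q+1) (r-1)"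
    unfolding DD_def ..
  have h1: "of_int(b+c+1) * (of_int ((p+2)*(p+1)) * C (p+2) q r) = of_int (c*(c-1)) * ind(p = c-2 \<and> q = b \<and> r = 0)"
  proof -
    have "of_int(b+c+1) * C (p+2) q r = ind (p+2 = c \<and> q = b \<and> r = 0)" using T pq by simp
    then show ?thesis by (auto simp: ind_def algebra_simps)
  qed
  have h2: "of_int(b+c+1) * (of_int ((q+2)*(q+1)) * C p (q+2) r) = of_int (b*(b-1)) * ind(p = c \<and> q = b-2 \<and> r = 0)"
  proof -
    have "of_int(b+c+1) * C p (q+2) r = ind (p = c \<and> q+2 = b \<and> r = 0)" using T pq by simp
    then show ?thesis by (auto simp: ind_def algebra_simps)
  qed
  have h3: "of_int(b+c+1) * (of_int ((p+1)*(q+1)) * C (p+1) (q+1) (r-1)) = of_int (c*b) * ind(p = c-1 \<and> q = b-1 \<and> r = 1)"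
  proof -
    have "of_int(b+c+1) * C (p+1) (q+1) (r-1) = ind (p+1 = c \<and> q+1 = b \<and> r-1 = 0)" using T pq by simp
    then show ?thesis by (auto simp: ind_def algebra_simps)
  qed
  have pq': "of_int p + of_int q = (of_int b + of_int c - 2 :: complex)" using pq
    by (metis of_int_add of_int_diff of_int_numeral)
  show ?thesis
    using d h1 h2 h3 pq' unfolding ofi by algebra
qed

lemma step_s0:
  assumes fam: "fam cj" and b: "0 \<le> b" and c: "1 \<le> c"
    and IH: "\<And>k1 k2 k3. k1+k2+k3 < (b+c)+c+b \<Longrightarrow> eig cj k1 k2 k3"
  shows "eig cj (b+c) c b"
proof -
  define n where "n = b+c"
  have n1: "1 \<le> n" using b c n_def by simp
  define CT where "CT = cj (b+c) c b"
  define Cb where "Cb = cj (b+c-1) (c-1) b"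
  define CA where "CA = cj (b+c-2) c b"
  define CB where "CB = cj (b+c-2) (c-2) b"
  define K1 where "K1 = Kc 1 1 (b+c-1) (c-1) b"
  define K3 where "K3 = Kc (-1) 1 (b+c-1) (c-1) b"
  define K4 where "K4 = Kc (-1) (-1) (b+c-1) (c-1) b"
  define lam where "lam = (of_int ((n+1)^2) :: complex)"
  define mu' where "mu' = (of_int ((n-1)^2) :: complex)"
  have ab: "admissible (b+c-1) (c-1) b" unfolding admissible_def using b c by (simp add: abs_le_iff; presburger)
  have K1nz: "K1 \<noteq> 0" unfolding K1_def using b c by (intro K11_nz) auto
  have R: "Cb (p-1) q r = K1 * CT p q r + K3 * CA p q r + K4 * CB p q r" for p q r
  proof -
    have z: "cj (b+c) (c-2) b p q r = 0" by (rule fam_na[OF fam]) (use b in \<open>simp add: admissible_def abs_le_iff\<close>)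
    show ?thesis
      using fam_s[OF fam ab, of p q r] z unfolding Cb_def CT_def CA_def CB_def K1_def K3_def K4_def
      by (simp add: algebra_simps)
  qed
  have Eb: "DD Cb p q r = of_int (n^2) * Cb p q r" for p q r
    using IH[of "b+c-1" "c-1" b] unfolding eig_def Cb_def n_def by auto
  have EA: "DD CA p q r = mu' * CA p q r" for p q r
    using IH[of "b+c-2" c b] unfolding eig_def CA_def mu'_def n_def by (auto simp: algebra_simps)
  have EB: "DD CB p q r = mu' * CB p q r" for p q r
    using IH[of "b+c-2" "c-2" b] unfolding eig_def CB_def mu'_def n_def by (auto simp: algebra_simps)
  define W where "W = ms Cb"
  have Wf: "W = (\<lambda>p q r. K1 * CT p q r + K3 * CA p q r + K4 * CB p q r)"
    by (intro ext) (simp add: W_def ms_def R)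
  have DbF: "DD Cb = (\<lambda>p q r. of_int (n^2) * Cb p q r)" by (intro ext) (rule Eb)
  have Q0: "DD (DD W) p q r - 2 * DD (ms (DD Cb)) p q r + ms (DD (DD Cb)) p q r
   - 2 * DD W p q r - 2 * ms (DD Cb) p q r + W p q r = 0" for p q r
    using QR[of Cb p q r] unfolding W_def .
  have m1: "ms (DD Cb) = (\<lambda>p q r. of_int (n^2) * W p q r)" by (intro ext) (simp add: DbF ms_def W_def)
  have m2: "DD (ms (DD Cb)) p q r = of_int (n^2) * DD W p q r" for p q r
    unfolding m1 by (rule DD_scal)
  have m3: "ms (DD (DD Cb)) p q r = of_int (n^2) * (of_int (n^2) * W p q r)" for p q r
  proof -
    have "DD (DD Cb) p q r = of_int (n^2) * (of_int (n^2) * Cb p q r)" for p q r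
      unfolding DbF by (simp only: DD_scal Eb)
    then show ?thesis by (simp add: ms_def W_def)
  qed
  have DW: "DD W = (\<lambda>p q r. K1 * DD CT p q r + (K3 * mu') * CA p q r + (K4 * mu') * CB p q r)"
    by (intro ext) (simp add: Wf DD_lin3 EA EB)
  have DDW: "DD (DD W) p q r = K1 * DD (DD CT) p q r + (K3 * mu') * (mu' * CA p q r) + (K4 * mu') * (mu' * CB p q r)" for p q r
    unfolding DW DD_lin3 EA EB ..
  have P0: "DD (DD CT) p q r = (lam + mu') * DD CT p q r - lam * mu' * CT p q r" for p q r
  proof -
    have a: "DD W p q r = K1 * DD CT p q r + (K3 * mu') * CA p q r + (K4 * mu') * CB p q r" by (simp add: DW)
    have w: "W p q r = K1 * CT p q r + K3 * CA p q r + K4 * CB p q r" by (simp add: Wf)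
    have m1': "ms (DD Cb) p q r = of_int (n^2) * W p q r" by (simp add: m1)
    have "K1 * (DD (DD CT) p q r - ((lam + mu') * DD CT p q r - lam * mu' * CT p q r)) = 0"
      using Q0[of p q r] m2[of p q r] m3[of p q r] DDW[of p q r] a w m1' unfolding lam_def mu'_def ofi by algebra
    then show ?thesis using K1nz by simp
  qed
  define Z where "Z = (\<lambda>p q r. 1 * DD CT p q r + (- lam) * CT p q r)"
  have EZ: "DD Z p q r = mu' * Z p q r" for p q r
    unfolding Z_def DD_lin2 P0 by (simp add: algebra_simps)
  have nsZ: "nsup Z"
    using fam_ns[OF fam, of "b+c" c b] DD_ns[OF fam_ns[OF fam, of "b+c" c b]] unfolding nsup_def Z_def CT_def by simp
  have FT: "Fd n CT" unfolding CT_def n_def by (rule fam_deg[OF fam])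
  have FZ1: "Fd (n-1) Z" unfolding Fd_def
  proof (intro allI impI)
    fix p q r assume "n - 1 < p + q"
    then consider "n < p + q" | "p + q = n" by linarith
    then show "Z p q r = 0"
    proof cases
      case 1 then show ?thesis using FT DD_Fd[OF FT] unfolding Fd_def Z_def by simp
    next
      case 2 then show ?thesis using DD_top[OF FT 2] unfolding Z_def lam_def by simp
    qed
  qed
  have FZ2: "Fd (n-2) Z"
  proof -
    have "of_int ((n - 1 + 1)^2) \<noteq> mu'"
    proof
      assume "of_int ((n - 1 + 1)^2) = mu'"
      then have "(n-1+1)^2 = (n-1)^2" unfolding mu'_def by (simp only: of_int_eq_iff)
      then show False using n1 by (simp add: power2_eq_square algebra_simps)
    qed
    from Fd_down[OF FZ1 EZ this] show ?thesis by simp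
  qed
  have TT: "of_int(b+c+1) * CT p q r = ind (p = c \<and> q = b \<and> r = 0)" if "p+q = b+c" for p q r
    unfolding CT_def by (rule fam_T0[OF fam b _ that]) (use c in simp)
  have FZ3: "Fd (n-3) Z" unfolding Fd_def
  proof (intro allI impI)
    fix p q r assume "n - 3 < p + q"
    then consider "n - 2 < p + q" | "p + q = n - 2" by linarith
    then show "Z p q r = 0"
    proof cases
      case 1 then show ?thesis using FZ2 unfolding Fd_def by simp
    next
      case 2
      show ?thesis
      proof (cases "p < 0 \<or> q < 0 \<or> r < 0")
        case True then show ?thesis using nsZ unfolding nsup_def by blast
      next
        case False
        then have pqr: "0 \<le> p" "0 \<le> q" "0 \<le> r" by auto
        have n2: "2 \<le> n" using 2 pqr by simp
        define I1 where "I1 = ind (p = c-2 \<and> q = b \<and> r = 0)"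
        define I2 where "I2 = ind (p = c \<and> q = b-2 \<and> r = 0)"
        define I3 where "I3 = ind (p = c-1 \<and> q = b-1 \<and> r = 1)"
        have Zexp: "of_int(b+c+1) * Z p q r = - of_int(4*(b+c)*(b+c+1)) * CT p q r
          - of_int(4*c*(c-1)) * I1 - of_int(4*b*(b-1)) * I2 - of_int(4*c*b) * I3"
          using Gtop[of b c CT p q r, OF TT] 2 unfolding Z_def I1_def I2_def I3_def lam_def n_def
          by (simp add: algebra_simps)
        have Sb0: "of_int(4*(b+(c-1))*(b+(c-1)+1)) * Cb (p-1) q r =
           - of_int(4*(c-1)*((c-1)-1)) * ind(p-1 = (c-1)-2 \<and> q = b \<and> r = 0)
           - of_int(4*b*(b-1)) * ind(p-1 = (c-1) \<and> q = b-2 \<and> r=0)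
           - of_int(4*(c-1)*b) * ind(p-1=(c-1)-1 \<and> q=b-1 \<and> r=1)"
        proof (rule S2)
          show "Fd (b + (c - 1)) Cb" using fam_deg[OF fam, of "b+c-1" "c-1" b] unfolding Cb_def by (simp add: algebra_simps)
          show "DD Cb p q r = of_int ((b + (c - 1) + 1)\<^sup>2) * Cb p q r" for p q r
            using Eb[of p q r] unfolding n_def by (simp add: algebra_simps)
          show "of_int (b + (c - 1) + 1) * Cb p q r = ind (p = c - 1 \<and> q = b \<and> r = 0)" if "p + q = b + (c - 1)" for p q r
            using fam_T0[OF fam b _ that] c unfolding Cb_def by (simp add: algebra_simps)
          show "p - 1 + q = b + (c - 1) - 2" using 2 unfolding n_def by simp
        qed
        have Sb: "of_int(4*(b+c-1)*(b+c)) * Cb (p-1) q r =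
           - of_int(4*(c-1)*(c-2)) * I1 - of_int(4*b*(b-1)) * I2 - of_int(4*(c-1)*b) * I3"
        proof -
          have "ind(p-1 = (c-1)-2 \<and> q = b \<and> r = 0) = I1" "ind(p-1 = (c-1) \<and> q = b-2 \<and> r=0) = I2"
             "ind(p-1=(c-1)-1 \<and> q=b-1 \<and> r=1) = I3" unfolding I1_def I2_def I3_def by (rule ind_cong; arith)+
          moreover have "4*(b+(c-1))*(b+(c-1)+1) = 4*(b+c-1)*(b+c)" "4*(c-1)*((c-1)-1) = 4*(c-1)*(c-2)"
            by (simp_all add: algebra_simps)
          ultimately show ?thesis using Sb0 by (simp only:)
        qed
        have TA: "of_int((b+c)*(b+c-1)) * (K3 * CA p q r) =
            K3 * (of_int(c*b) * I3 - of_int((b-1)*c) * I2 - of_int((c-1)*b) * I1)"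
        proof (cases "b = 0")
          case True
          have "K3 = 0" unfolding K3_def Kc_def using True by simp
          then show ?thesis by simp
        next
          case False
          have "of_int (((b-1)+(c-1)+2)*((b-1)+(c-1)+1)) * cj ((b-1)+(c-1)) ((c-1)+1) ((b-1)+1) p q r =
            of_int (((c-1)+1)*((b-1)+1)) * ind (p = (c-1) \<and> q = (b-1) \<and> r = 1)
            - of_int ((b-1)*((c-1)+1)) * ind (p = (c-1)+1 \<and> q = (b-1)-1 \<and> r = 0)
            - of_int ((c-1)*((b-1)+1)) * ind (p = (c-1)-1 \<and> q = (b-1)+1 \<and> r = 0)"
            by (rule fam_T1[OF fam]) (use b c False 2 n_def in auto)
          moreover have "ind (p = (c-1)+1 \<and> q = (b-1)-1 \<and> r = 0) = I2"
            "ind (p = (c-1)-1 \<and> q = (b-1)+1 \<and> r = 0) = I1" "ind (p = (c-1) \<and> q = (b-1) \<and> r = 1) = I3"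
            unfolding I1_def I2_def I3_def by (rule ind_cong; arith)+
          moreover have "(b-1)+(c-1)+2 = b+c" "(b-1)+(c-1)+1 = b+c-1" "(b-1)+(c-1) = b+c-2" "(c-1)+1 = c" "(b-1)+1 = b"
            by simp_all
          ultimately have "of_int((b+c)*(b+c-1)) * CA p q r =
            of_int(c*b) * I3 - of_int((b-1)*c) * I2 - of_int((c-1)*b) * I1" unfolding CA_def by simp
          then show ?thesis by (metis mult.left_commute)
        qed
        have TB: "of_int(b+c-1) * (K4 * CB p q r) = K4 * I1"
        proof (cases "c = 1")
          case True
          have "K4 = 0" unfolding K4_def Kc_def using True by simp
          then show ?thesis by simp
        next
          case False
          have "of_int (b+(c-2)+1) * cj (b+(c-2)) (c-2) b p q r = ind (p = c-2 \<and> q = b \<and> r = 0)"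
            by (rule fam_T0[OF fam b]) (use c False 2 n_def in auto)
          moreover have "b+(c-2)+1 = b+c-1" "b+(c-2) = b+c-2" by simp_all
          ultimately have "of_int(b+c-1) * CB p q r = I1" unfolding CB_def I1_def by simp
          then show ?thesis by (metis mult.left_commute)
        qed
        have K1v: "of_int (4*(b+c-1+1)*(c-1+1)) * K1 = of_int (1*1*(1*(b+c-1)+1*(c-1)+b+1+1+2)*(1*(b+c-1)+1*(c-1)-b+1+1))"
          unfolding K1_def by (rule Kc_mul) (use b c in auto)
        have K3v: "of_int (4*(b+c-1+1)*(c-1+1)) * K3 = of_int ((-1)*1*((-1)*(b+c-1)+1*(c-1)+b+(-1)+1+2)*((-1)*(b+c-1)+1*(c-1)-b+(-1)+1))"
          unfolding K3_def by (rule Kc_mul) (use b c in auto)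
        have K4v: "of_int (4*(b+c-1+1)*(c-1+1)) * K4 = of_int ((-1)*(-1)*((-1)*(b+c-1)+(-1)*(c-1)+b+(-1)+(-1)+2)*((-1)*(b+c-1)+(-1)*(c-1)-b+(-1)+(-1)))"
          unfolding K4_def by (rule Kc_mul) (use b c in auto)
        have "of_int (16*c*(b+c)*(b+c-1)*(b+c+1)*(b+c+1)) * Z p q r = 0"
          using Zexp R[of p q r] Sb TA TB K1v K3v K4v unfolding ofi by algebra
        moreover have "of_int (16*c*(b+c)*(b+c-1)*(b+c+1)*(b+c+1)) \<noteq> (0::complex)"
          using n2 c unfolding n_def by (simp del: of_int_mult of_int_add of_int_diff)
        ultimately show ?thesis by simp
      qed
    qed
  qed
  have Z0: "Z p q r = 0" for p q r
  proof (rule vanish[OF nsZ FZ3 EZ])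
    fix k :: int assume k: "0 \<le> k" "k \<le> n - 3"
    show "of_int ((k+1)^2) \<noteq> mu'"
    proof
      assume "of_int ((k+1)^2) = mu'"
      then have "(k+1)^2 = (n-1)^2" unfolding mu'_def by (simp only: of_int_eq_iff)
      moreover have "(k+1)^2 < (n-1)^2" using k by (intro power_strict_mono) auto
      ultimately show False by simp
    qed
  qed
  show ?thesis unfolding eig_def
  proof (intro allI)
    fix p q r show "DD (cj (b + c) c b) p q r = of_int ((b + c + 1)\<^sup>2) * cj (b + c) c b p q r"
      using Z0[of p q r] unfolding Z_def CT_def lam_def n_def by simp
  qed
qed

lemma eig_000: "fam cj \<Longrightarrow> eig cj 0 0 0"
  unfolding eig_def
proof (intro allI)
  fix p q r :: int assume f: "fam cj"
  have a: "of_int((p+2)*(p+1)) * ind (p+2 = 0 \<and> q = 0 \<and> r = 0) = 0"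
  proof (cases "p+2 = 0")
    case True then have "p = -2" by simp
    then show ?thesis by simp
  qed (simp add: ind_def)
  have b: "of_int((q+2)*(q+1)) * ind (p = 0 \<and> q+2 = 0 \<and> r = 0) = 0"
  proof (cases "q+2 = 0")
    case True then have "q = -2" by simp
    then show ?thesis by simp
  qed (simp add: ind_def)
  have c: "of_int((p+1)*(q+1)) * ind (p+1 = 0 \<and> q+1 = 0 \<and> r-1 = 0) = 0"
  proof (cases "p+1 = 0")
    case True then have "p = -1" by simp
    then show ?thesis by simp
  qed (simp add: ind_def)
  have d: "of_int ((p+q+1)) ^ 2 * ind (p = 0 \<and> q = 0 \<and> r = 0) = ind (p = 0 \<and> q = 0 \<and> r = 0)"
    by (auto simp: ind_def)
  show "DD (cj 0 0 0) p q r = of_int ((0+1)^2) * cj 0 0 0 p q r"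
    unfolding DD_def fam_0[OF f] mult.assoc a b c d by simp
qed

lemma eig_all: "fam cj \<Longrightarrow> admissible j1 j2 j3 \<Longrightarrow> eig cj j1 j2 j3"
proof -
  have main: "\<forall>cj. fam cj \<longrightarrow> (\<forall>j1 j2 j3. admissible j1 j2 j3 \<longrightarrow> nat (j1+j2+j3) < m \<longrightarrow> eig cj j1 j2 j3)" for m
  proof (induction m)
    case 0 then show ?case by simp
  next
    case (Suc m)
    show ?case
    proof (intro allI impI)
      fix cj j1 j2 j3 assume fam: "fam cj" and adm: "admissible j1 j2 j3" and lt: "nat (j1+j2+j3) < Suc m"
      have IHg: "eig cj' k1 k2 k3" if "fam cj'" "k1+k2+k3 < j1+j2+j3" for cj' k1 k2 k3
      proof (cases "admissible k1 k2 k3")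
        case True
        then have "nat (k1+k2+k3) < m" using that lt adm_pos[OF True] adm_pos[OF adm] by auto
        then show ?thesis using Suc.IH that True by blast
      next
        case False then show ?thesis using eig_na that by blast
      qed
      have "j1 \<le> j2 + j3" using adm unfolding admissible_def by (simp add: abs_le_iff)
      then have "(j1 = 0 \<and> j2 = 0 \<and> j3 = 0) \<or> j1 < j2 + j3 \<or> (j1 = j3 + j2 \<and> 1 \<le> j2) \<or> (j1 = j3 \<and> j2 = 0 \<and> 1 \<le> j3)"
        using adm_pos[OF adm] by linarith
      then consider (z) "j1 = 0 \<and> j2 = 0 \<and> j3 = 0" | (u) "j1 < j2 + j3" | (s) "j1 = j3 + j2 \<and> 1 \<le> j2"
        | (w) "j1 = j3 \<and> j2 = 0 \<and> 1 \<le> j3" by blast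
      then show "eig cj j1 j2 j3"
      proof cases
        case z then show ?thesis using eig_000[OF fam] by simp
      next
        case u then show ?thesis using step_u[OF fam adm u] IHg[OF fam] by blast
      next
        case s
        have "eig cj (j3+j2) j2 j3"
          by (rule step_s0[OF fam]) (use s adm_pos[OF adm] IHg[OF fam] in auto)
        then show ?thesis using s by simp
      next
        case w
        have "eig (swf cj) (0+j3) j3 0"
          by (rule step_s0[OF fam_sw[OF fam]]) (use w adm_pos[OF adm] IHg[OF fam_sw[OF fam]] in auto)
        then show ?thesis using w unfolding eig_def swf_def DD_sw by (simp add: sw_def)
      qed
    qed
  qed
  assume "fam cj" "admissible j1 j2 j3"
  then show ?thesis using main[of "Suc (nat (j1+j2+j3))"] by blast
qed



definition L :: "complex \<Rightarrow> complex" where "L x = x + inverse x"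
definition ev :: "nat \<Rightarrow> cf \<Rightarrow> complex \<Rightarrow> complex \<Rightarrow> complex \<Rightarrow> complex" where
  "ev M C s t u = (\<Sum>p\<le>M. (\<Sum>q\<le>M. (\<Sum>r\<le>M. C (int p) (int q) (int r) * u^r) * t^q) * s^p)"
definition bnd :: "nat \<Rightarrow> cf \<Rightarrow> bool" where
  "bnd M C \<longleftrightarrow> (\<forall>p q r. C p q r \<noteq> 0 \<longrightarrow> 0 \<le> p \<and> p \<le> int M \<and> 0 \<le> q \<and> q \<le> int M \<and> 0 \<le> r \<and> r \<le> int M)"
definition rep :: "fun3 \<Rightarrow> cf \<Rightarrow> bool" where
  "rep f C \<longleftrightarrow> (\<exists>M. bnd M C \<and> (\<forall>x y z. x \<noteq> 0 \<longrightarrow> y \<noteq> 0 \<longrightarrow> z \<noteq> 0 \<longrightarrow> f x y z = ev M C (L x) (L y) (L z)))"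

lemma bnd_mono: "bnd M C \<Longrightarrow> M \<le> M' \<Longrightarrow> bnd M' C"
  unfolding bnd_def by force

lemma bnd_zero: "bnd M C \<Longrightarrow> (int M < p \<or> int M < q \<or> int M < r) \<Longrightarrow> C p q r = 0"
  unfolding bnd_def by force

lemma sum_ext_zero: "(M::nat) \<le> M' \<Longrightarrow> (\<And>i. M < i \<Longrightarrow> i \<le> M' \<Longrightarrow> f i = 0) \<Longrightarrow> (\<Sum>i\<le>M'. f i) = (\<Sum>i\<le>M. f i)"
proof -
  assume m: "M \<le> M'" and z: "\<And>i. M < i \<Longrightarrow> i \<le> M' \<Longrightarrow> f i = 0"
  have "sum f {..M'} = sum f {..M}"
  proof (rule sum.mono_neutral_right)
    show "finite {..M'}" by simp
    show "{..M} \<subseteq> {..M'}" using m by auto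
    show "\<forall>i\<in>{..M'} - {..M}. f i = 0" using z by auto
  qed
  then show ?thesis by simp
qed

lemma ev_mono: "bnd M C \<Longrightarrow> M \<le> M' \<Longrightarrow> ev M' C s t u = ev M C s t u"
proof -
  assume b: "bnd M C" and m: "M \<le> M'"
  have z: "C (int p) (int q) (int r) = 0" if "M < p \<or> M < q \<or> M < r" for p q r
    using bnd_zero[OF b] that by auto
  have r: "(\<Sum>r\<le>M'. C (int p) (int q) (int r) * u^r) = (\<Sum>r\<le>M. C (int p) (int q) (int r) * u^r)" for p q
    by (rule sum_ext_zero[OF m]) (simp add: z)
  have q: "(\<Sum>q\<le>M'. (\<Sum>r\<le>M. C (int p) (int q) (int r) * u^r) * t^q) = (\<Sum>q\<le>M. (\<Sum>r\<le>M. C (int p) (int q) (int r) * u^r) * t^q)" for p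
    by (rule sum_ext_zero[OF m]) (simp add: z)
  have p: "(\<Sum>p\<le>M'. (\<Sum>q\<le>M. (\<Sum>r\<le>M. C (int p) (int q) (int r) * u^r) * t^q) * s^p) = (\<Sum>p\<le>M. (\<Sum>q\<le>M. (\<Sum>r\<le>M. C (int p) (int q) (int r) * u^r) * t^q) * s^p)"
    by (rule sum_ext_zero[OF m]) (simp add: z)
  show ?thesis unfolding ev_def r q p ..
qed

lemma ev_lin: "ev M (\<lambda>p q r. a * C p q r + b * D p q r) s t u = a * ev M C s t u + b * ev M D s t u"
  unfolding ev_def by (simp add: sum.distrib sum_distrib_left algebra_simps)

lemma ev_scal: "ev M (\<lambda>p q r. a * C p q r) s t u = a * ev M C s t u"
  unfolding ev_def by (simp add: sum_distrib_left algebra_simps)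

lemma ev_sw: "ev M C s t u = ev M (sw C) t s u"
proof -
  have a: "ev M C s t u = (\<Sum>p\<le>M. \<Sum>q\<le>M. (\<Sum>r\<le>M. C (int p) (int q) (int r) * u^r) * t^q * s^p)"
    unfolding ev_def by (simp add: sum_distrib_right)
  have b: "ev M (sw C) t s u = (\<Sum>p\<le>M. \<Sum>q\<le>M. (\<Sum>r\<le>M. C (int q) (int p) (int r) * u^r) * s^q * t^p)"
    unfolding ev_def sw_def by (simp add: sum_distrib_right)
  show ?thesis unfolding a b by (subst sum.swap) (simp add: mult_ac)
qed

definition sw23 :: "cf \<Rightarrow> cf" where "sw23 C p q r = C p r q"

lemma ev_sw23: "ev M C s t u = ev M (sw23 C) s u t"
proof -
  have i: "(\<Sum>q\<le>M. (\<Sum>r\<le>M. C (int p) (int q) (int r) * u^r) * t^q)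
     = (\<Sum>q\<le>M. (\<Sum>r\<le>M. C (int p) (int r) (int q) * t^r) * u^q)" for p
  proof -
    have a: "(\<Sum>q\<le>M. (\<Sum>r\<le>M. C (int p) (int q) (int r) * u^r) * t^q) = (\<Sum>q\<le>M. \<Sum>r\<le>M. C (int p) (int q) (int r) * u^r * t^q)"
      by (simp add: sum_distrib_right)
    have b: "(\<Sum>q\<le>M. (\<Sum>r\<le>M. C (int p) (int r) (int q) * t^r) * u^q) = (\<Sum>q\<le>M. \<Sum>r\<le>M. C (int p) (int r) (int q) * t^r * u^q)"
      by (simp add: sum_distrib_right)
    show ?thesis unfolding a b by (subst sum.swap) (simp add: mult_ac)
  qed
  show ?thesis unfolding ev_def sw23_def i ..
qed

lemma bnd_sw: "bnd M C \<Longrightarrow> bnd M (sw C)" unfolding bnd_def sw_def by blast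
lemma bnd_sw23: "bnd M C \<Longrightarrow> bnd M (sw23 C)" unfolding bnd_def sw23_def by blast
lemma bnd_ms: "bnd M C \<Longrightarrow> bnd (Suc M) (ms C)" unfolding bnd_def ms_def by force
lemma bnd_mt: "bnd M C \<Longrightarrow> bnd (Suc M) (mt C)" unfolding bnd_def mt_def by force
lemma bnd_mu: "bnd M C \<Longrightarrow> bnd (Suc M) (mu C)" unfolding bnd_def mu_def by force
lemma bnd_lin: "bnd M C \<Longrightarrow> bnd M D \<Longrightarrow> bnd M (\<lambda>p q r. a * C p q r + b * D p q r)"
  unfolding bnd_def by (metis add.right_neutral mult_zero_right)

lemma ev_ms: "bnd M C \<Longrightarrow> M < M' \<Longrightarrow> ev M' (ms C) s t u = s * ev M' C s t u"
proof -
  assume b: "bnd M C" and m: "M < M'"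
  then obtain M'' where M': "M' = Suc M''" by (cases M') auto
  define A where "A = (\<lambda>p::nat. (\<Sum>q\<le>M'. (\<Sum>r\<le>M'. C (int p) (int q) (int r) * u^r) * t^q))"
  have zm: "C (-1) q r = 0" for q r using b unfolding bnd_def by force
  have zM: "A (Suc M'') = 0" unfolding A_def using bnd_zero[OF b] m M' by simp
  have "ev M' (ms C) s t u = (\<Sum>p\<le>Suc M''. (\<Sum>q\<le>M'. (\<Sum>r\<le>M'. C (int p - 1) (int q) (int r) * u^r) * t^q) * s^p)"
    unfolding ev_def ms_def M' ..
  also have "\<dots> = (\<Sum>p\<le>M''. A p * s^(Suc p))"
    by (subst sum.atMost_Suc_shift) (simp add: zm A_def)
  also have "\<dots> = s * (\<Sum>p\<le>M''. A p * s^p)"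
    by (simp add: sum_distrib_left algebra_simps)
  also have "(\<Sum>p\<le>M''. A p * s^p) = ev M' C s t u"
  proof -
    have "ev M' C s t u = (\<Sum>p\<le>Suc M''. A p * s^p)" unfolding ev_def A_def M' ..
    also have "\<dots> = (\<Sum>p\<le>M''. A p * s^p) + A (Suc M'') * s^(Suc M'')" by (rule sum.atMost_Suc)
    finally show ?thesis using zM by simp
  qed
  finally show ?thesis .
qed

lemma ev_mt: "bnd M C \<Longrightarrow> M < M' \<Longrightarrow> ev M' (mt C) s t u = t * ev M' C s t u"
proof -
  assume b: "bnd M C" and m: "M < M'"
  have e: "sw (mt C) = ms (sw C)" by (intro ext) (simp add: sw_def mt_def ms_def)
  have "ev M' (mt C) s t u = ev M' (ms (sw C)) t s u" by (simp add: ev_sw[of M' "mt C"] e)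
  also have "\<dots> = t * ev M' (sw C) t s u" by (rule ev_ms[OF bnd_sw[OF b] m])
  also have "ev M' (sw C) t s u = ev M' C s t u" by (simp add: ev_sw[of M' C])
  finally show ?thesis .
qed

lemma ev_mu: "bnd M C \<Longrightarrow> M < M' \<Longrightarrow> ev M' (mu C) s t u = u * ev M' C s t u"
proof -
  assume b: "bnd M C" and m: "M < M'"
  have e: "sw23 (mu C) = mt (sw23 C)" by (intro ext) (simp add: sw23_def mt_def mu_def)
  have "ev M' (mu C) s t u = ev M' (mt (sw23 C)) s u t" by (simp add: ev_sw23[of M' "mu C"] e)
  also have "\<dots> = u * ev M' (sw23 C) s u t" by (rule ev_mt[OF bnd_sw23[OF b] m])
  also have "ev M' (sw23 C) s u t = ev M' C s t u" by (simp add: ev_sw23[of M' C])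
  finally show ?thesis .
qed

lemma ev_inj: "bnd M C \<Longrightarrow> (\<And>s t u. ev M C s t u = 0) \<Longrightarrow> C p q r = 0"
proof -
  assume b: "bnd M C" and z: "\<And>s t u. ev M C s t u = 0"
  show ?thesis
  proof (cases "0 \<le> p \<and> p \<le> int M \<and> 0 \<le> q \<and> q \<le> int M \<and> 0 \<le> r \<and> r \<le> int M")
    case False then show ?thesis using b unfolding bnd_def by blast
  next
    case True
    then obtain p' q' r' where pqr: "p = int p'" "q = int q'" "r = int r'" "p' \<le> M" "q' \<le> M" "r' \<le> M"
      by (metis nat_0_le nat_le_iff)
    have 1: "(\<Sum>q\<le>M. (\<Sum>r\<le>M. C (int p') (int q) (int r) * u^r) * t^q) = 0" for t u
      using z[unfolded ev_def] polyfun_eq_0[where c="\<lambda>p. (\<Sum>q\<le>M. (\<Sum>r\<le>M. C (int p) (int q) (int r) * u^r) * t^q)" and n=M]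
        pqr by blast
    have 2: "(\<Sum>r\<le>M. C (int p') (int q') (int r) * u^r) = 0" for u
      using 1 polyfun_eq_0[where c="\<lambda>q. (\<Sum>r\<le>M. C (int p') (int q) (int r) * u^r)" and n=M] pqr by blast
    have "C (int p') (int q') (int r') = 0"
      using 2 polyfun_eq_0[where c="\<lambda>r. C (int p') (int q') (int r)" and n=M] pqr by blast
    then show ?thesis using pqr by simp
  qed
qed

lemma L_surj: "\<exists>x. x \<noteq> 0 \<and> L x = w"
proof -
  define sq where "sq = csqrt (w^2 - 4)"
  have sq2: "sq^2 = w^2 - 4" unfolding sq_def by simp
  define x where "x = (w + sq) / 2"
  define y where "y = (w - sq) / 2"
  have xy: "x * y = 1" unfolding x_def y_def using sq2 by (simp add: field_simps power2_eq_square)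
  then have x0: "x \<noteq> 0" by auto
  have "inverse x = y" using xy x0 by (simp add: field_simps)
  then have "L x = w" unfolding L_def x_def y_def by (simp add: field_simps)
  then show ?thesis using x0 by blast
qed

lemma rep_bnd: "rep f C \<Longrightarrow> \<exists>M. bnd M C" unfolding rep_def by blast

lemma rep_ev: "rep f C \<Longrightarrow> \<exists>M0. \<forall>M\<ge>M0. bnd M C \<and> (\<forall>x y z. x \<noteq> 0 \<longrightarrow> y \<noteq> 0 \<longrightarrow> z \<noteq> 0 \<longrightarrow> f x y z = ev M C (L x) (L y) (L z))"
  unfolding rep_def by (metis bnd_mono ev_mono)

lemma rep_unique: "rep f C \<Longrightarrow> rep f D \<Longrightarrow> C p q r = D p q r"
proof -
  assume a: "rep f C" "rep f D"
  obtain M1 where M1: "\<forall>M\<ge>M1. bnd M C \<and> (\<forall>x y z. x \<noteq> 0 \<longrightarrow> y \<noteq> 0 \<longrightarrow> z \<noteq> 0 \<longrightarrow> f x y z = ev M C (L x) (L y) (L z))"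
    using rep_ev[OF a(1)] by blast
  obtain M2 where M2: "\<forall>M\<ge>M2. bnd M D \<and> (\<forall>x y z. x \<noteq> 0 \<longrightarrow> y \<noteq> 0 \<longrightarrow> z \<noteq> 0 \<longrightarrow> f x y z = ev M D (L x) (L y) (L z))"
    using rep_ev[OF a(2)] by blast
  define M where "M = max M1 M2"
  have bC: "bnd M C" and bD: "bnd M D" using M1 M2 unfolding M_def by auto
  have b: "bnd M (\<lambda>p q r. 1 * C p q r + (-1) * D p q r)" by (rule bnd_lin[OF bC bD])
  have "ev M (\<lambda>p q r. 1 * C p q r + (-1) * D p q r) s t u = 0" for s t u
  proof -
    obtain x where x: "x \<noteq> 0" "L x = s" using L_surj by blast
    obtain y where y: "y \<noteq> 0" "L y = t" using L_surj by blast
    obtain z where z: "z \<noteq> 0" "L z = u" using L_surj by blast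
    have "ev M C s t u = ev M D s t u"
      using M1 M2 x y z unfolding M_def by (metis max.cobounded1 max.cobounded2)
    then show ?thesis unfolding ev_lin by simp
  qed
  from ev_inj[OF b this] show ?thesis by simp
qed

lemma rep_cong: "rep f C \<Longrightarrow> (\<And>x y z. x \<noteq> 0 \<Longrightarrow> y \<noteq> 0 \<Longrightarrow> z \<noteq> 0 \<Longrightarrow> g x y z = f x y z) \<Longrightarrow> rep g C"
  unfolding rep_def by metis

lemma rep_lin: "rep f C \<Longrightarrow> rep g D \<Longrightarrow> rep (\<lambda>x y z. a * f x y z + b * g x y z) (\<lambda>p q r. a * C p q r + b * D p q r)"
proof -
  assume a: "rep f C" "rep g D"
  obtain M1 where M1: "\<forall>M\<ge>M1. bnd M C \<and> (\<forall>x y z. x \<noteq> 0 \<longrightarrow> y \<noteq> 0 \<longrightarrow> z \<noteq> 0 \<longrightarrow> f x y z = ev M C (L x) (L y) (L z))"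
    using rep_ev[OF a(1)] by blast
  obtain M2 where M2: "\<forall>M\<ge>M2. bnd M D \<and> (\<forall>x y z. x \<noteq> 0 \<longrightarrow> y \<noteq> 0 \<longrightarrow> z \<noteq> 0 \<longrightarrow> g x y z = ev M D (L x) (L y) (L z))"
    using rep_ev[OF a(2)] by blast
  define M where "M = max M1 M2"
  have bC: "bnd M C" and bD: "bnd M D" using M1 M2 unfolding M_def by auto
  show ?thesis unfolding rep_def
  proof (intro exI conjI allI impI)
    show "bnd M (\<lambda>p q r. a * C p q r + b * D p q r)" by (rule bnd_lin[OF bC bD])
    fix x y z :: complex assume "x \<noteq> 0" "y \<noteq> 0" "z \<noteq> 0"
    then show "a * f x y z + b * g x y z = ev M (\<lambda>p q r. a * C p q r + b * D p q r) (L x) (L y) (L z)"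
      using M1 M2 unfolding ev_lin M_def by (metis max.cobounded1 max.cobounded2)
  qed
qed

lemma rep_zero: "rep (\<lambda>x y z. 0) (\<lambda>p q r. 0)"
  unfolding rep_def bnd_def ev_def by simp

lemma rep_ms: "rep f C \<Longrightarrow> rep (\<lambda>x y z. L x * f x y z) (ms C)"
proof -
  assume a: "rep f C"
  then obtain M where b: "bnd M C" and e: "\<forall>x y z. x \<noteq> 0 \<longrightarrow> y \<noteq> 0 \<longrightarrow> z \<noteq> 0 \<longrightarrow> f x y z = ev M C (L x) (L y) (L z)"
    unfolding rep_def by blast
  show ?thesis unfolding rep_def
  proof (intro exI conjI allI impI)
    show "bnd (Suc M) (ms C)" by (rule bnd_ms[OF b])
    fix x y z :: complex assume "x \<noteq> 0" "y \<noteq> 0" "z \<noteq> 0"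
    then show "L x * f x y z = ev (Suc M) (ms C) (L x) (L y) (L z)"
      using e ev_ms[OF b, of "Suc M"] ev_mono[OF b, of "Suc M"] by simp
  qed
qed

lemma rep_mt: "rep f C \<Longrightarrow> rep (\<lambda>x y z. L y * f x y z) (mt C)"
proof -
  assume a: "rep f C"
  then obtain M where b: "bnd M C" and e: "\<forall>x y z. x \<noteq> 0 \<longrightarrow> y \<noteq> 0 \<longrightarrow> z \<noteq> 0 \<longrightarrow> f x y z = ev M C (L x) (L y) (L z)"
    unfolding rep_def by blast
  show ?thesis unfolding rep_def
  proof (intro exI conjI allI impI)
    show "bnd (Suc M) (mt C)" by (rule bnd_mt[OF b])
    fix x y z :: complex assume "x \<noteq> 0" "y \<noteq> 0" "z \<noteq> 0"
    then show "L y * f x y z = ev (Suc M) (mt C) (L x) (L y) (L z)"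
      using e ev_mt[OF b, of "Suc M"] ev_mono[OF b, of "Suc M"] by simp
  qed
qed

lemma rep_mu: "rep f C \<Longrightarrow> rep (\<lambda>x y z. L z * f x y z) (mu C)"
proof -
  assume a: "rep f C"
  then obtain M where b: "bnd M C" and e: "\<forall>x y z. x \<noteq> 0 \<longrightarrow> y \<noteq> 0 \<longrightarrow> z \<noteq> 0 \<longrightarrow> f x y z = ev M C (L x) (L y) (L z)"
    unfolding rep_def by blast
  show ?thesis unfolding rep_def
  proof (intro exI conjI allI impI)
    show "bnd (Suc M) (mu C)" by (rule bnd_mu[OF b])
    fix x y z :: complex assume "x \<noteq> 0" "y \<noteq> 0" "z \<noteq> 0"
    then show "L z * f x y z = ev (Suc M) (mu C) (L x) (L y) (L z)"
      using e ev_mu[OF b, of "Suc M"] ev_mono[OF b, of "Suc M"] by simp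
  qed
qed



definition dS :: "cf \<Rightarrow> cf" where "dS C p q r = of_int (p+1) * C (p+1) q r"
definition dT :: "cf \<Rightarrow> cf" where "dT C p q r = of_int (q+1) * C p (q+1) r"

lemma bnd_dS: "bnd M C \<Longrightarrow> bnd M (dS C)"
  unfolding bnd_def dS_def by (metis add.commute add_le_imp_le_left mult_eq_0_iff of_int_0 order.trans
    zle_add1_eq_le zless_add1_eq le_less add_increasing2 zero_le_one)

lemma bnd_dT: "bnd M C \<Longrightarrow> bnd M (dT C)"
  unfolding bnd_def dT_def by (metis add.commute add_le_imp_le_left mult_eq_0_iff of_int_0 order.trans
    zle_add1_eq_le zless_add1_eq le_less add_increasing2 zero_le_one)

lemma shift_deriv:
  assumes z: "A (Suc M) = 0"
  shows "(\<Sum>p\<le>M. A p * (of_nat p * (1 * s^(p - Suc 0)))) = (\<Sum>p\<le>M. of_nat (Suc p) * A (Suc p) * (s::complex)^p)"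
proof (cases M)
  case 0 then show ?thesis using z by simp
next
  case (Suc n)
  have "(\<Sum>p\<le>Suc n. A p * (of_nat p * (1 * s^(p - Suc 0)))) = (\<Sum>p\<le>n. of_nat (Suc p) * A (Suc p) * s^p)"
    by (subst sum.atMost_Suc_shift) (simp add: algebra_simps)
  also have "\<dots> = (\<Sum>p\<le>Suc n. of_nat (Suc p) * A (Suc p) * s^p)"
    using z Suc by simp
  finally show ?thesis using Suc by simp
qed

lemma ev_deriv_s: "bnd M C \<Longrightarrow> ((\<lambda>s. ev M C s t u) has_field_derivative ev M (dS C) s t u) (at s)"
proof -
  assume b: "bnd M C"
  define A where "A = (\<lambda>p::nat. (\<Sum>q\<le>M. (\<Sum>r\<le>M. C (int p) (int q) (int r) * u^r) * t^q))"
  have e: "(\<lambda>s. ev M C s t u) = (\<lambda>s. \<Sum>p\<le>M. A p * s^p)" unfolding ev_def A_def ..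
  have d: "((\<lambda>s. \<Sum>p\<le>M. A p * s^p) has_field_derivative (\<Sum>p\<le>M. A p * (of_nat p * (1 * s^(p - Suc 0))))) (at s)"
    by (intro DERIV_sum DERIV_cmult DERIV_power DERIV_ident)
  have zM: "A (Suc M) = 0" unfolding A_def using bnd_zero[OF b] by simp
  have "(\<Sum>p\<le>M. A p * (of_nat p * (1 * s^(p - Suc 0)))) = (\<Sum>p\<le>M. of_nat (Suc p) * A (Suc p) * s^p)"
    by (rule shift_deriv[where A=A and M=M, OF zM])
  also have "\<dots> = ev M (dS C) s t u"
    unfolding ev_def dS_def A_def by (simp add: sum_distrib_left algebra_simps)
  finally show ?thesis using d e by simp
qed

lemma ev_deriv_t: "bnd M C \<Longrightarrow> ((\<lambda>t. ev M C s t u) has_field_derivative ev M (dT C) s t u) (at t)"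
proof -
  assume b: "bnd M C"
  have e: "(\<lambda>t. ev M C s t u) = (\<lambda>t. ev M (sw C) t s u)" using ev_sw[of M C] by auto
  have "sw (dS (sw C)) = dT C" by (intro ext) (simp add: sw_def dS_def dT_def)
  then have e2: "ev M (dS (sw C)) t s u = ev M (dT C) s t u" using ev_sw[of M "dS (sw C)"] by simp
  show ?thesis using ev_deriv_s[OF bnd_sw[OF b], where s=t and t=s and u=u] e e2 by simp
qed

lemma L_deriv: "x \<noteq> 0 \<Longrightarrow> (L has_field_derivative (1 - inverse x ^ 2)) (at x)"
  unfolding L_def[abs_def]
  by (rule derivative_eq_intros refl | simp add: power2_eq_square)+

lemma Ld_deriv: "x \<noteq> 0 \<Longrightarrow> ((\<lambda>x. 1 - inverse x ^ 2) has_field_derivative (2 * inverse x ^ 3)) (at x)"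
  by (rule derivative_eq_intros refl | simp add: power2_eq_square field_simps eval_nat_numeral)+

lemma dlem: "(g has_field_derivative D) (at x) \<Longrightarrow> x \<noteq> 0 \<Longrightarrow> (\<And>t. t \<noteq> 0 \<Longrightarrow> h t = g t) \<Longrightarrow> deriv h x = D"
proof -
  assume g: "(g has_field_derivative D) (at x)" and x: "x \<noteq> 0" and h: "\<And>t. t \<noteq> 0 \<Longrightarrow> h t = g t"
  have "(h has_field_derivative D) (at x)"
    by (rule has_field_derivative_transform_within_open[OF g, of "-{0}"]) (use x h in auto)
  then show ?thesis by (rule DERIV_imp_deriv)
qed

definition Ld :: "complex \<Rightarrow> complex" where "Ld x = 1 - inverse x ^ 2"

definition eqf :: "nat \<Rightarrow> cf \<Rightarrow> fun3 \<Rightarrow> bool" where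
  "eqf M C f \<longleftrightarrow> (\<forall>x y z. x \<noteq> 0 \<longrightarrow> y \<noteq> 0 \<longrightarrow> z \<noteq> 0 \<longrightarrow> f x y z = ev M C (L x) (L y) (L z))"

lemma chain_s: "bnd M C \<Longrightarrow> x \<noteq> 0 \<Longrightarrow>
  ((\<lambda>t. ev M C (L t) b c) has_field_derivative (ev M (dS C) (L x) b c * Ld x)) (at x)"
  unfolding Ld_def by (rule DERIV_chain2[OF ev_deriv_s L_deriv])

lemma chain_t: "bnd M C \<Longrightarrow> y \<noteq> 0 \<Longrightarrow>
  ((\<lambda>t. ev M C a (L t) c) has_field_derivative (ev M (dT C) a (L y) c * Ld y)) (at y)"
  unfolding Ld_def by (rule DERIV_chain2[OF ev_deriv_t L_deriv])

lemma d1_f: "bnd M C \<Longrightarrow> eqf M C f \<Longrightarrow> x \<noteq> 0 \<Longrightarrow> y \<noteq> 0 \<Longrightarrow> z \<noteq> 0 \<Longrightarrow>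
  d1 f x y z = ev M (dS C) (L x) (L y) (L z) * Ld x"
  unfolding d1_def eqf_def by (rule dlem[OF chain_s]) auto

lemma d2_f: "bnd M C \<Longrightarrow> eqf M C f \<Longrightarrow> x \<noteq> 0 \<Longrightarrow> y \<noteq> 0 \<Longrightarrow> z \<noteq> 0 \<Longrightarrow>
  d2 f x y z = ev M (dT C) (L x) (L y) (L z) * Ld y"
  unfolding d2_def eqf_def by (rule dlem[OF chain_t]) auto

lemma d11_f: "bnd M C \<Longrightarrow> eqf M C f \<Longrightarrow> x \<noteq> 0 \<Longrightarrow> y \<noteq> 0 \<Longrightarrow> z \<noteq> 0 \<Longrightarrow>
  d1 (d1 f) x y z = ev M (dS (dS C)) (L x) (L y) (L z) * Ld x * Ld x + ev M (dS C) (L x) (L y) (L z) * (2 * inverse x ^ 3)"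
proof -
  assume b: "bnd M C" and e: "eqf M C f" and x: "x \<noteq> 0" and y: "y \<noteq> 0" and z: "z \<noteq> 0"
  have D: "((\<lambda>t. ev M (dS C) (L t) (L y) (L z) * Ld t) has_field_derivative
     (ev M (dS (dS C)) (L x) (L y) (L z) * Ld x * Ld x + ev M (dS C) (L x) (L y) (L z) * (2 * inverse x ^ 3))) (at x)"
    using DERIV_mult[OF chain_s[OF bnd_dS[OF b] x, where b="L y" and c="L z"] Ld_deriv[OF x, folded Ld_def[abs_def]]]
    by (simp add: mult.commute)
  show ?thesis unfolding d1_def[of "d1 f"]
    by (rule dlem[OF D x]) (simp add: d1_f[OF b e] y z)
qed

lemma d22_f: "bnd M C \<Longrightarrow> eqf M C f \<Longrightarrow> x \<noteq> 0 \<Longrightarrow> y \<noteq> 0 \<Longrightarrow> z \<noteq> 0 \<Longrightarrow>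
  d2 (d2 f) x y z = ev M (dT (dT C)) (L x) (L y) (L z) * Ld y * Ld y + ev M (dT C) (L x) (L y) (L z) * (2 * inverse y ^ 3)"
proof -
  assume b: "bnd M C" and e: "eqf M C f" and x: "x \<noteq> 0" and y: "y \<noteq> 0" and z: "z \<noteq> 0"
  have D: "((\<lambda>t. ev M (dT C) (L x) (L t) (L z) * Ld t) has_field_derivative
     (ev M (dT (dT C)) (L x) (L y) (L z) * Ld y * Ld y + ev M (dT C) (L x) (L y) (L z) * (2 * inverse y ^ 3))) (at y)"
    using DERIV_mult[OF chain_t[OF bnd_dT[OF b] y, where a="L x" and c="L z"] Ld_deriv[OF y, folded Ld_def[abs_def]]]
    by (simp add: mult.commute)
  show ?thesis unfolding d2_def[of "d2 f"]
    by (rule dlem[OF D y]) (simp add: d2_f[OF b e] x z)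
qed

lemma d21_f: "bnd M C \<Longrightarrow> eqf M C f \<Longrightarrow> x \<noteq> 0 \<Longrightarrow> y \<noteq> 0 \<Longrightarrow> z \<noteq> 0 \<Longrightarrow>
  d2 (d1 f) x y z = ev M (dT (dS C)) (L x) (L y) (L z) * Ld y * Ld x"
proof -
  assume b: "bnd M C" and e: "eqf M C f" and x: "x \<noteq> 0" and y: "y \<noteq> 0" and z: "z \<noteq> 0"
  have D: "((\<lambda>t. ev M (dS C) (L x) (L t) (L z) * Ld x) has_field_derivative
     (ev M (dT (dS C)) (L x) (L y) (L z) * Ld y * Ld x)) (at y)"
    using DERIV_cmult_right[OF chain_t[OF bnd_dS[OF b] y]] by simp
  show ?thesis unfolding d2_def[of "d1 f"]
    by (rule dlem[OF D y]) (simp add: d1_f[OF b e] x z)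
qed

lemma DD_decomp: "DD C p q r = ms (ms (dS (dS C))) p q r - 4 * dS (dS C) p q r + mt (mt (dT (dT C))) p q r
   - 4 * dT (dT C) p q r + 2 * ms (mt (dT (dS C))) p q r - 4 * mu (dT (dS C)) p q r
   + 3 * ms (dS C) p q r + 3 * mt (dT C) p q r + C p q r"
  unfolding DD_def ms_def mt_def mu_def dS_def dT_def by (simp add: algebra_simps power2_eq_square)

lemma ev_add: "ev M (\<lambda>p q r. X p q r + Y p q r) s t u = ev M X s t u + ev M Y s t u"
  using ev_lin[of M 1 X 1 Y] by simp
lemma ev_diff: "ev M (\<lambda>p q r. X p q r - Y p q r) s t u = ev M X s t u - ev M Y s t u"
  using ev_lin[of M 1 X "-1" Y] by simp

lemma ev_DD: "bnd M C \<Longrightarrow> ev (M+2) (DD C) s t u =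
   (s * s - 4) * ev M (dS (dS C)) s t u + (t * t - 4) * ev M (dT (dT C)) s t u
   + (2 * s * t - 4 * u) * ev M (dT (dS C)) s t u + 3 * s * ev M (dS C) s t u + 3 * t * ev M (dT C) s t u + ev M C s t u"
proof -
  assume b: "bnd M C"
  have b1: "bnd M (dS (dS C))" "bnd M (dT (dT C))" "bnd M (dT (dS C))" "bnd M (dS C)" "bnd M (dT C)"
    using b by (simp_all add: bnd_dS bnd_dT)
  have e: "DD C = (\<lambda>p q r. ms (ms (dS (dS C))) p q r - 4 * dS (dS C) p q r + mt (mt (dT (dT C))) p q r
   - 4 * dT (dT C) p q r + 2 * ms (mt (dT (dS C))) p q r - 4 * mu (dT (dS C)) p q r
   + 3 * ms (dS C) p q r + 3 * mt (dT C) p q r + C p q r)"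
    by (intro ext) (rule DD_decomp)
  have m: "M < M + 2" "Suc M < M + 2" by simp_all
  have s1: "ev (M+2) (ms (ms (dS (dS C)))) s t u = s * (s * ev M (dS (dS C)) s t u)"
    using ev_ms[OF bnd_ms[OF b1(1)] m(2)] ev_ms[OF b1(1) m(1)] ev_mono[OF b1(1), of "M+2"] by simp
  have s2: "ev (M+2) (mt (mt (dT (dT C)))) s t u = t * (t * ev M (dT (dT C)) s t u)"
    using ev_mt[OF bnd_mt[OF b1(2)] m(2)] ev_mt[OF b1(2) m(1)] ev_mono[OF b1(2), of "M+2"] by simp
  have s3: "ev (M+2) (ms (mt (dT (dS C)))) s t u = s * (t * ev M (dT (dS C)) s t u)"
    using ev_ms[OF bnd_mt[OF b1(3)] m(2)] ev_mt[OF b1(3) m(1)] ev_mono[OF b1(3), of "M+2"] by simp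
  have s4: "ev (M+2) (mu (dT (dS C))) s t u = u * ev M (dT (dS C)) s t u"
    using ev_mu[OF b1(3) m(1)] ev_mono[OF b1(3), of "M+2"] by simp
  have s5: "ev (M+2) (ms (dS C)) s t u = s * ev M (dS C) s t u"
    using ev_ms[OF b1(4) m(1)] ev_mono[OF b1(4), of "M+2"] by simp
  have s6: "ev (M+2) (mt (dT C)) s t u = t * ev M (dT C) s t u"
    using ev_mt[OF b1(5) m(1)] ev_mono[OF b1(5), of "M+2"] by simp
  have s7: "ev (M+2) (dS (dS C)) s t u = ev M (dS (dS C)) s t u" "ev (M+2) (dT (dT C)) s t u = ev M (dT (dT C)) s t u"
    "ev (M+2) C s t u = ev M C s t u"
    using ev_mono[OF b1(1), of "M+2"] ev_mono[OF b1(2), of "M+2"] ev_mono[OF b, of "M+2"] by simp_all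
  show ?thesis unfolding e
    by (simp only: ev_add ev_diff ev_scal s1 s2 s3 s4 s5 s6 s7) (simp add: algebra_simps)
qed

lemma cab: "(a::complex) \<noteq> 0 \<Longrightarrow> b \<noteq> 0 \<Longrightarrow> N / (a * b) * (G * (b * ib) * (a * ia)) = N * G * ia * ib"
  by (simp add: field_simps)

lemma ca: "(a::complex) \<noteq> 0 \<Longrightarrow> N / a * (G * (a * ia)) = N * G * ia"
  by (simp add: field_simps)

lemma H1_ev: "bnd M C \<Longrightarrow> eqf M C f \<Longrightarrow> x \<notin> {0, 1, -1} \<Longrightarrow> y \<notin> {0, 1, -1} \<Longrightarrow> z \<noteq> 0 \<Longrightarrow>
  H1 f x y z = ev (M+2) (DD C) (L x) (L y) (L z)"
proof -
  assume b: "bnd M C" and e: "eqf M C f" and x: "x \<notin> {0, 1, -1}" and y: "y \<notin> {0, 1, -1}" and z: "z \<noteq> 0"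
  have x0: "x \<noteq> 0" and y0: "y \<noteq> 0" using x y by auto
  have xx: "x * x \<noteq> 1"
  proof
    assume "x * x = 1"
    then have "(x - 1) * (x + 1) = 0" by (simp add: algebra_simps)
    then have "x = 1 \<or> x = -1" by (metis eq_neg_iff_add_eq_0 eq_iff_diff_eq_0 mult_eq_0_iff)
    then show False using x by auto
  qed
  have yy: "y * y \<noteq> 1"
  proof
    assume "y * y = 1"
    then have "(y - 1) * (y + 1) = 0" by (simp add: algebra_simps)
    then have "y = 1 \<or> y = -1" by (metis eq_neg_iff_add_eq_0 eq_iff_diff_eq_0 mult_eq_0_iff)
    then show False using y by auto
  qed
  have xi: "x - inverse x \<noteq> 0" using xx x0 by (simp add: field_simps)
  have yi: "y - inverse y \<noteq> 0" using yy y0 by (simp add: field_simps)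
  define G where "G = ev M C (L x) (L y) (L z)"
  define Gs where "Gs = ev M (dS C) (L x) (L y) (L z)"
  define Gt where "Gt = ev M (dT C) (L x) (L y) (L z)"
  define Gss where "Gss = ev M (dS (dS C)) (L x) (L y) (L z)"
  define Gtt where "Gtt = ev M (dT (dT C)) (L x) (L y) (L z)"
  define Gst where "Gst = ev M (dT (dS C)) (L x) (L y) (L z)"
  have fv: "f x y z = G" using e x0 y0 z unfolding eqf_def G_def by blast
  have "H1 f x y z = Hgen x y z (Gss * Ld x * Ld x + Gs * (2 * inverse x ^ 3))
      (Gtt * Ld y * Ld y + Gt * (2 * inverse y ^ 3)) (Gst * Ld y * Ld x) (Gs * Ld x) (Gt * Ld y) G"
    unfolding H1_def G_def Gs_def Gt_def Gss_def Gtt_def Gst_def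
    using d11_f[OF b e x0 y0 z] d22_f[OF b e x0 y0 z] d21_f[OF b e x0 y0 z] d1_f[OF b e x0 y0 z]
      d2_f[OF b e x0 y0 z] fv[unfolded G_def] by simp
  also have "\<dots> = (L x * L x - 4) * Gss + (L y * L y - 4) * Gtt + (2 * L x * L y - 4 * L z) * Gst
      + 3 * L x * Gs + 3 * L y * Gt + G"
  proof -
    have Ldx: "Ld x = (x - inverse x) * inverse x" unfolding Ld_def using x0 by (simp add: field_simps power2_eq_square)
    have Ldy: "Ld y = (y - inverse y) * inverse y" unfolding Ld_def using y0 by (simp add: field_simps power2_eq_square)
    have c1: "N / ((x - inverse x) * (y - inverse y)) * (Gst * ((y - inverse y) * inverse y) * ((x - inverse x) * inverse x))
       = N * Gst * inverse x * inverse y" for N using cab[OF xi yi] by simp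
    have c2: "N / (x - inverse x) * (Gs * ((x - inverse x) * inverse x)) = N * Gs * inverse x" for N
      using ca[OF xi] by simp
    have c3: "N / (y - inverse y) * (Gt * ((y - inverse y) * inverse y)) = N * Gt * inverse y" for N
      using ca[OF yi] by simp
    have ix: "x * inverse x = 1" and iy: "y * inverse y = 1" using x0 y0 by simp_all
    show ?thesis unfolding Hgen_def Ldx Ldy c1 c2 c3 L_def using ix iy by algebra
  qed
  also have "\<dots> = ev (M+2) (DD C) (L x) (L y) (L z)"
    unfolding ev_DD[OF b] G_def Gs_def Gt_def Gss_def Gtt_def Gst_def by (simp add: algebra_simps)
  finally show ?thesis .
qed



lemma adm_sym12: "admissible j2 j1 j3 = admissible j1 j2 j3"
  unfolding admissible_def by (auto simp: abs_le_iff algebra_simps)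
lemma adm_cyc: "admissible j2 j3 j1 = admissible j1 j2 j3"
  unfolding admissible_def by (auto simp: abs_le_iff algebra_simps)

lemma pm_sum: "(\<Sum>a\<in>pm. f a) = f 1 + f (-1)"
  unfolding pm_def by (simp add: add.commute)

lemma sf_0: "schur_family \<phi> \<Longrightarrow> x \<noteq> 0 \<Longrightarrow> y \<noteq> 0 \<Longrightarrow> z \<noteq> 0 \<Longrightarrow> \<phi> 0 0 0 x y z = 1"
  unfolding schur_family_def by blast

lemma sf_s: "schur_family \<phi> \<Longrightarrow> admissible j1 j2 j3 \<Longrightarrow> x \<noteq> 0 \<Longrightarrow> y \<noteq> 0 \<Longrightarrow> z \<noteq> 0 \<Longrightarrow>
  L x * \<phi> j1 j2 j3 x y z = Kc 1 1 j1 j2 j3 * phiz \<phi> (j1+1) (j2+1) j3 x y z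
    + Kc 1 (-1) j1 j2 j3 * phiz \<phi> (j1+1) (j2-1) j3 x y z
    + Kc (-1) 1 j1 j2 j3 * phiz \<phi> (j1-1) (j2+1) j3 x y z
    + Kc (-1) (-1) j1 j2 j3 * phiz \<phi> (j1-1) (j2-1) j3 x y z"
  unfolding schur_family_def L_def pm_sum by (simp add: algebra_simps)

lemma sf_t: "schur_family \<phi> \<Longrightarrow> admissible j1 j2 j3 \<Longrightarrow> x \<noteq> 0 \<Longrightarrow> y \<noteq> 0 \<Longrightarrow> z \<noteq> 0 \<Longrightarrow>
  L y * \<phi> j1 j2 j3 x y z = Kc 1 1 j1 j3 j2 * phiz \<phi> (j1+1) j2 (j3+1) x y z
    + Kc 1 (-1) j1 j3 j2 * phiz \<phi> (j1+1) j2 (j3-1) x y z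
    + Kc (-1) 1 j1 j3 j2 * phiz \<phi> (j1-1) j2 (j3+1) x y z
    + Kc (-1) (-1) j1 j3 j2 * phiz \<phi> (j1-1) j2 (j3-1) x y z"
  unfolding schur_family_def L_def pm_sum by (simp add: algebra_simps)

lemma sf_u: "schur_family \<phi> \<Longrightarrow> admissible j1 j2 j3 \<Longrightarrow> x \<noteq> 0 \<Longrightarrow> y \<noteq> 0 \<Longrightarrow> z \<noteq> 0 \<Longrightarrow>
  L z * \<phi> j1 j2 j3 x y z = Kc 1 1 j2 j3 j1 * phiz \<phi> j1 (j2+1) (j3+1) x y z
    + Kc 1 (-1) j2 j3 j1 * phiz \<phi> j1 (j2+1) (j3-1) x y z
    + Kc (-1) 1 j2 j3 j1 * phiz \<phi> j1 (j2-1) (j3+1) x y z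
    + Kc (-1) (-1) j2 j3 j1 * phiz \<phi> j1 (j2-1) (j3-1) x y z"
  unfolding schur_family_def L_def pm_sum by (simp add: algebra_simps)

lemma rep_lin4: "rep f1 C1 \<Longrightarrow> rep f2 C2 \<Longrightarrow> rep f3 C3 \<Longrightarrow> rep f4 C4 \<Longrightarrow>
  rep (\<lambda>x y z. a1 * f1 x y z + a2 * f2 x y z + a3 * f3 x y z + a4 * f4 x y z)
      (\<lambda>p q r. a1 * C1 p q r + a2 * C2 p q r + a3 * C3 p q r + a4 * C4 p q r)"
proof -
  assume r: "rep f1 C1" "rep f2 C2" "rep f3 C3" "rep f4 C4"
  have a: "rep (\<lambda>x y z. a1 * f1 x y z + a2 * f2 x y z) (\<lambda>p q r. a1 * C1 p q r + a2 * C2 p q r)"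
    by (rule rep_lin[OF r(1,2)])
  have b: "rep (\<lambda>x y z. a3 * f3 x y z + a4 * f4 x y z) (\<lambda>p q r. a3 * C3 p q r + a4 * C4 p q r)"
    by (rule rep_lin[OF r(3,4)])
  have "rep (\<lambda>x y z. 1 * (a1 * f1 x y z + a2 * f2 x y z) + 1 * (a3 * f3 x y z + a4 * f4 x y z))
      (\<lambda>p q r. 1 * (a1 * C1 p q r + a2 * C2 p q r) + 1 * (a3 * C3 p q r + a4 * C4 p q r))"
    by (rule rep_lin[OF a b])
  then show ?thesis by (simp add: add.assoc)
qed

lemma rep_phiz: "(admissible k1 k2 k3 \<Longrightarrow> \<exists>C. rep (\<phi> k1 k2 k3) C) \<Longrightarrow> \<exists>C. rep (phiz \<phi> k1 k2 k3) C"
  unfolding phiz_def using rep_zero by (cases "admissible k1 k2 k3") auto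

lemma solve_rep:
  assumes r0: "rep (\<lambda>x y z. L' x y z * f x y z) C0" and r1: "rep Y1 C1" and r2: "rep Y2 C2" and r3: "rep Y3 C3"
    and e: "\<And>x y z. x \<noteq> 0 \<Longrightarrow> y \<noteq> 0 \<Longrightarrow> z \<noteq> 0 \<Longrightarrow> L' x y z * f x y z = K * g x y z + a * Y1 x y z + b * Y2 x y z + c * Y3 x y z"
    and K: "K \<noteq> 0"
  shows "\<exists>C. rep g C"
proof -
  have "rep (\<lambda>x y z. inverse K * (L' x y z * f x y z) + (- inverse K * a) * Y1 x y z + (- inverse K * b) * Y2 x y z + (- inverse K * c) * Y3 x y z)
     (\<lambda>p q r. inverse K * C0 p q r + (- inverse K * a) * C1 p q r + (- inverse K * b) * C2 p q r + (- inverse K * c) * C3 p q r)"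
    by (rule rep_lin4[OF r0 r1 r2 r3])
  then have "rep g (\<lambda>p q r. inverse K * C0 p q r + (- inverse K * a) * C1 p q r + (- inverse K * b) * C2 p q r + (- inverse K * c) * C3 p q r)"
    by (rule rep_cong) (simp add: e K field_simps)
  then show ?thesis by blast
qed

lemma rep_exists0: "admissible j1 j2 j3 \<Longrightarrow> schur_family \<phi> \<Longrightarrow> \<exists>C. rep (\<phi> j1 j2 j3) C"
proof (induction j1 j2 j3 rule: adm_induct)
  case (1 j1 j2 j3)
  have sf: "schur_family \<phi>" by fact
  have IH: "\<exists>C. rep (phiz \<phi> k1 k2 k3) C" if "k1+k2+k3 < j1+j2+j3" for k1 k2 k3
    by (rule rep_phiz) (use "1.IH"[OF _ that sf] in blast)
  have pz: "phiz \<phi> j1 j2 j3 = \<phi> j1 j2 j3" using "1.hyps" unfolding phiz_def by simp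
  from adm_cases[OF "1.hyps"] show ?case
  proof (elim disjE conjE)
    assume "j1 = 0" "j2 = 0" "j3 = 0"
    have "rep (\<lambda>x y z. 1) (\<lambda>p q r. ind (p = 0 \<and> q = 0 \<and> r = 0))"
      unfolding rep_def
    proof (intro exI conjI allI impI)
      show "bnd 0 (\<lambda>p q r. ind (p = 0 \<and> q = 0 \<and> r = 0))" unfolding bnd_def ind_def by auto
      fix x y z :: complex show "1 = ev 0 (\<lambda>p q r. ind (p = 0 \<and> q = 0 \<and> r = 0)) (L x) (L y) (L z)"
        unfolding ev_def ind_def by simp
    qed
    then have "rep (\<phi> 0 0 0) (\<lambda>p q r. ind (p = 0 \<and> q = 0 \<and> r = 0))"
      by (rule rep_cong) (simp add: sf_0[OF sf])
    then show ?thesis using \<open>j1 = 0\<close> \<open>j2 = 0\<close> \<open>j3 = 0\<close> by blast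
  next
    assume lt: "j3 < j1 + j2"
    have ab: "admissible (j1-1) (j2-1) j3" using adm_s[OF "1.hyps" lt] .
    have nz: "Kc 1 1 (j1-1) (j2-1) j3 \<noteq> 0" using ab unfolding admissible_def by (intro K11_nz) auto
    obtain C0 where c0: "rep (\<phi> (j1-1) (j2-1) j3) C0" using IH[of "j1-1" "j2-1" j3] ab unfolding phiz_def by auto
    obtain C1 where c1: "rep (phiz \<phi> j1 (j2-2) j3) C1" using IH[of j1 "j2-2" j3] by auto
    obtain C2 where c2: "rep (phiz \<phi> (j1-2) j2 j3) C2" using IH[of "j1-2" j2 j3] by auto
    obtain C3 where c3: "rep (phiz \<phi> (j1-2) (j2-2) j3) C3" using IH[of "j1-2" "j2-2" j3] by auto
    show ?thesis
      by (rule solve_rep[OF rep_ms[OF c0] c1 c2 c3 _ nz])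
        (use sf_s[OF sf ab] pz in \<open>simp add: algebra_simps\<close>)
  next
    assume eq: "j3 = j1 + j2" and "1 \<le> j1"
    have lt: "j2 < j1 + j3" using eq \<open>1 \<le> j1\<close> by simp
    have ab: "admissible (j1-1) j2 (j3-1)" using adm_t[OF "1.hyps" lt] .
    have nz: "Kc 1 1 (j1-1) (j3-1) j2 \<noteq> 0" using ab unfolding admissible_def by (intro K11_nz) auto
    obtain C0 where c0: "rep (\<phi> (j1-1) j2 (j3-1)) C0" using IH[of "j1-1" j2 "j3-1"] ab unfolding phiz_def by auto
    obtain C1 where c1: "rep (phiz \<phi> j1 j2 (j3-2)) C1" using IH[of j1 j2 "j3-2"] by auto
    obtain C2 where c2: "rep (phiz \<phi> (j1-2) j2 j3) C2" using IH[of "j1-2" j2 j3] by auto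
    obtain C3 where c3: "rep (phiz \<phi> (j1-2) j2 (j3-2)) C3" using IH[of "j1-2" j2 "j3-2"] by auto
    show ?thesis
      by (rule solve_rep[OF rep_mt[OF c0] c1 c2 c3 _ nz])
        (use sf_t[OF sf ab] pz in \<open>simp add: algebra_simps\<close>)
  next
    assume "j1 = 0" "j2 = j3" "1 \<le> j2" and lt: "j1 < j2 + j3"
    have ab: "admissible j1 (j2-1) (j3-1)" using adm_u[OF "1.hyps" lt] .
    have nz: "Kc 1 1 (j2-1) (j3-1) j1 \<noteq> 0" using ab unfolding admissible_def by (intro K11_nz) auto
    obtain C0 where c0: "rep (\<phi> j1 (j2-1) (j3-1)) C0" using IH[of j1 "j2-1" "j3-1"] ab unfolding phiz_def by auto
    obtain C1 where c1: "rep (phiz \<phi> j1 j2 (j3-2)) C1" using IH[of j1 j2 "j3-2"] by auto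
    obtain C2 where c2: "rep (phiz \<phi> j1 (j2-2) j3) C2" using IH[of j1 "j2-2" j3] by auto
    obtain C3 where c3: "rep (phiz \<phi> j1 (j2-2) (j3-2)) C3" using IH[of j1 "j2-2" "j3-2"] by auto
    show ?thesis
      by (rule solve_rep[OF rep_mu[OF c0] c1 c2 c3 _ nz])
        (use sf_u[OF sf ab] pz in \<open>simp add: algebra_simps\<close>)
  qed
qed

lemma rep_exists: "schur_family \<phi> \<Longrightarrow> \<exists>C. rep (phiz \<phi> j1 j2 j3) C"
  by (rule rep_phiz) (rule rep_exists0)



definition cjp :: "(int \<Rightarrow> int \<Rightarrow> int \<Rightarrow> fun3) \<Rightarrow> int \<Rightarrow> int \<Rightarrow> int \<Rightarrow> cf" where
  "cjp \<phi> j1 j2 j3 = (SOME C. rep (phiz \<phi> j1 j2 j3) C)"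

lemma cjp_rep: "schur_family \<phi> \<Longrightarrow> rep (phiz \<phi> j1 j2 j3) (cjp \<phi> j1 j2 j3)"
  unfolding cjp_def by (rule someI_ex[OF rep_exists])

lemma rep_eqI: "rep f C \<Longrightarrow> rep g D \<Longrightarrow> (\<And>x y z. x \<noteq> 0 \<Longrightarrow> y \<noteq> 0 \<Longrightarrow> z \<noteq> 0 \<Longrightarrow> f x y z = g x y z) \<Longrightarrow> C p q r = D p q r"
  by (rule rep_unique) (auto intro: rep_cong)

lemma fam_cjp: "schur_family \<phi> \<Longrightarrow> fam (cjp \<phi>)"
proof -
  assume sf: "schur_family \<phi>"
  note R = cjp_rep[OF sf]
  show ?thesis unfolding fam_def
  proof (intro conjI allI impI)
    fix j1 j2 j3 p q r assume "\<not> admissible j1 j2 j3"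
    then have "phiz \<phi> j1 j2 j3 = (\<lambda>_ _ _. 0)" unfolding phiz_def by simp
    then have "cjp \<phi> j1 j2 j3 p q r = (\<lambda>p q r. 0) p q r"
      by (intro rep_eqI[OF R rep_zero]) simp
    then show "cjp \<phi> j1 j2 j3 p q r = 0" by simp
  next
    fix j1 j2 j3
    obtain M where b: "bnd M (cjp \<phi> j1 j2 j3)" using rep_bnd[OF R[of j1 j2 j3]] by blast
    show "nsup (cjp \<phi> j1 j2 j3)" unfolding nsup_def
    proof (intro allI impI)
      fix p q r :: int assume "p < 0 \<or> q < 0 \<or> r < 0"
      then show "cjp \<phi> j1 j2 j3 p q r = 0" using b unfolding bnd_def by (meson not_less)
    qed
  next
    fix p q r
    have "rep (\<lambda>x y z. 1) (\<lambda>p q r. ind (p = 0 \<and> q = 0 \<and> r = 0))"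
      unfolding rep_def
    proof (intro exI conjI allI impI)
      show "bnd 0 (\<lambda>p q r. ind (p = 0 \<and> q = 0 \<and> r = 0))" unfolding bnd_def ind_def by auto
      fix x y z :: complex show "1 = ev 0 (\<lambda>p q r. ind (p = 0 \<and> q = 0 \<and> r = 0)) (L x) (L y) (L z)"
        unfolding ev_def ind_def by simp
    qed
    moreover have "phiz \<phi> 0 0 0 x y z = 1" if "x \<noteq> 0" "y \<noteq> 0" "z \<noteq> 0" for x y z
      using sf_0[OF sf that] unfolding phiz_def admissible_def by simp
    ultimately have "cjp \<phi> 0 0 0 p q r = (\<lambda>p q r. ind (p = 0 \<and> q = 0 \<and> r = 0)) p q r"
      by (intro rep_eqI[OF R]) auto
    then show "cjp \<phi> 0 0 0 p q r = ind (p = 0 \<and> q = 0 \<and> r = 0)" by simp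
  next
    fix j1 j2 j3 p q r assume a: "admissible j1 j2 j3"
    have "rep (\<lambda>x y z. Kc 1 1 j1 j2 j3 * phiz \<phi> (j1+1) (j2+1) j3 x y z + Kc 1 (-1) j1 j2 j3 * phiz \<phi> (j1+1) (j2-1) j3 x y z
      + Kc (-1) 1 j1 j2 j3 * phiz \<phi> (j1-1) (j2+1) j3 x y z + Kc (-1) (-1) j1 j2 j3 * phiz \<phi> (j1-1) (j2-1) j3 x y z)
      (\<lambda>p q r. Kc 1 1 j1 j2 j3 * cjp \<phi> (j1+1) (j2+1) j3 p q r + Kc 1 (-1) j1 j2 j3 * cjp \<phi> (j1+1) (j2-1) j3 p q r
      + Kc (-1) 1 j1 j2 j3 * cjp \<phi> (j1-1) (j2+1) j3 p q r + Kc (-1) (-1) j1 j2 j3 * cjp \<phi> (j1-1) (j2-1) j3 p q r)"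
      by (rule rep_lin4[OF R R R R])
    moreover have "L x * phiz \<phi> j1 j2 j3 x y z = Kc 1 1 j1 j2 j3 * phiz \<phi> (j1+1) (j2+1) j3 x y z + Kc 1 (-1) j1 j2 j3 * phiz \<phi> (j1+1) (j2-1) j3 x y z
      + Kc (-1) 1 j1 j2 j3 * phiz \<phi> (j1-1) (j2+1) j3 x y z + Kc (-1) (-1) j1 j2 j3 * phiz \<phi> (j1-1) (j2-1) j3 x y z"
      if "x \<noteq> 0" "y \<noteq> 0" "z \<noteq> 0" for x y z
      using sf_s[OF sf a that] a unfolding phiz_def[of \<phi> j1 j2 j3] by simp
    ultimately have "ms (cjp \<phi> j1 j2 j3) p q r = (\<lambda>p q r. Kc 1 1 j1 j2 j3 * cjp \<phi> (j1+1) (j2+1) j3 p q r + Kc 1 (-1) j1 j2 j3 * cjp \<phi> (j1+1) (j2-1) j3 p q r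
      + Kc (-1) 1 j1 j2 j3 * cjp \<phi> (j1-1) (j2+1) j3 p q r + Kc (-1) (-1) j1 j2 j3 * cjp \<phi> (j1-1) (j2-1) j3 p q r) p q r"
      by (rule rep_eqI[OF rep_ms[OF R]])
    then show "ms (cjp \<phi> j1 j2 j3) p q r = Kc 1 1 j1 j2 j3 * cjp \<phi> (j1+1) (j2+1) j3 p q r + Kc 1 (-1) j1 j2 j3 * cjp \<phi> (j1+1) (j2-1) j3 p q r
      + Kc (-1) 1 j1 j2 j3 * cjp \<phi> (j1-1) (j2+1) j3 p q r + Kc (-1) (-1) j1 j2 j3 * cjp \<phi> (j1-1) (j2-1) j3 p q r" by simp
  next
    fix j1 j2 j3 p q r assume a: "admissible j1 j2 j3"
    have "rep (\<lambda>x y z. Kc 1 1 j1 j3 j2 * phiz \<phi> (j1+1) j2 (j3+1) x y z + Kc 1 (-1) j1 j3 j2 * phiz \<phi> (j1+1) j2 (j3-1) x y z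
      + Kc (-1) 1 j1 j3 j2 * phiz \<phi> (j1-1) j2 (j3+1) x y z + Kc (-1) (-1) j1 j3 j2 * phiz \<phi> (j1-1) j2 (j3-1) x y z)
      (\<lambda>p q r. Kc 1 1 j1 j3 j2 * cjp \<phi> (j1+1) j2 (j3+1) p q r + Kc 1 (-1) j1 j3 j2 * cjp \<phi> (j1+1) j2 (j3-1) p q r
      + Kc (-1) 1 j1 j3 j2 * cjp \<phi> (j1-1) j2 (j3+1) p q r + Kc (-1) (-1) j1 j3 j2 * cjp \<phi> (j1-1) j2 (j3-1) p q r)"
      by (rule rep_lin4[OF R R R R])
    moreover have "L y * phiz \<phi> j1 j2 j3 x y z = Kc 1 1 j1 j3 j2 * phiz \<phi> (j1+1) j2 (j3+1) x y z + Kc 1 (-1) j1 j3 j2 * phiz \<phi> (j1+1) j2 (j3-1) x y z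
      + Kc (-1) 1 j1 j3 j2 * phiz \<phi> (j1-1) j2 (j3+1) x y z + Kc (-1) (-1) j1 j3 j2 * phiz \<phi> (j1-1) j2 (j3-1) x y z"
      if "x \<noteq> 0" "y \<noteq> 0" "z \<noteq> 0" for x y z
      using sf_t[OF sf a that] a unfolding phiz_def[of \<phi> j1 j2 j3] by simp
    ultimately have "mt (cjp \<phi> j1 j2 j3) p q r = (\<lambda>p q r. Kc 1 1 j1 j3 j2 * cjp \<phi> (j1+1) j2 (j3+1) p q r + Kc 1 (-1) j1 j3 j2 * cjp \<phi> (j1+1) j2 (j3-1) p q r
      + Kc (-1) 1 j1 j3 j2 * cjp \<phi> (j1-1) j2 (j3+1) p q r + Kc (-1) (-1) j1 j3 j2 * cjp \<phi> (j1-1) j2 (j3-1) p q r) p q r"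
      by (rule rep_eqI[OF rep_mt[OF R]])
    then show "mt (cjp \<phi> j1 j2 j3) p q r = Kc 1 1 j1 j3 j2 * cjp \<phi> (j1+1) j2 (j3+1) p q r + Kc 1 (-1) j1 j3 j2 * cjp \<phi> (j1+1) j2 (j3-1) p q r
      + Kc (-1) 1 j1 j3 j2 * cjp \<phi> (j1-1) j2 (j3+1) p q r + Kc (-1) (-1) j1 j3 j2 * cjp \<phi> (j1-1) j2 (j3-1) p q r" by simp
  next
    fix j1 j2 j3 p q r assume a: "admissible j1 j2 j3"
    have "rep (\<lambda>x y z. Kc 1 1 j2 j3 j1 * phiz \<phi> j1 (j2+1) (j3+1) x y z + Kc 1 (-1) j2 j3 j1 * phiz \<phi> j1 (j2+1) (j3-1) x y z
      + Kc (-1) 1 j2 j3 j1 * phiz \<phi> j1 (j2-1) (j3+1) x y z + Kc (-1) (-1) j2 j3 j1 * phiz \<phi> j1 (j2-1) (j3-1) x y z)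
      (\<lambda>p q r. Kc 1 1 j2 j3 j1 * cjp \<phi> j1 (j2+1) (j3+1) p q r + Kc 1 (-1) j2 j3 j1 * cjp \<phi> j1 (j2+1) (j3-1) p q r
      + Kc (-1) 1 j2 j3 j1 * cjp \<phi> j1 (j2-1) (j3+1) p q r + Kc (-1) (-1) j2 j3 j1 * cjp \<phi> j1 (j2-1) (j3-1) p q r)"
      by (rule rep_lin4[OF R R R R])
    moreover have "L z * phiz \<phi> j1 j2 j3 x y z = Kc 1 1 j2 j3 j1 * phiz \<phi> j1 (j2+1) (j3+1) x y z + Kc 1 (-1) j2 j3 j1 * phiz \<phi> j1 (j2+1) (j3-1) x y z
      + Kc (-1) 1 j2 j3 j1 * phiz \<phi> j1 (j2-1) (j3+1) x y z + Kc (-1) (-1) j2 j3 j1 * phiz \<phi> j1 (j2-1) (j3-1) x y z"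
      if "x \<noteq> 0" "y \<noteq> 0" "z \<noteq> 0" for x y z
      using sf_u[OF sf a that] a unfolding phiz_def[of \<phi> j1 j2 j3] by simp
    ultimately have "mu (cjp \<phi> j1 j2 j3) p q r = (\<lambda>p q r. Kc 1 1 j2 j3 j1 * cjp \<phi> j1 (j2+1) (j3+1) p q r + Kc 1 (-1) j2 j3 j1 * cjp \<phi> j1 (j2+1) (j3-1) p q r
      + Kc (-1) 1 j2 j3 j1 * cjp \<phi> j1 (j2-1) (j3+1) p q r + Kc (-1) (-1) j2 j3 j1 * cjp \<phi> j1 (j2-1) (j3-1) p q r) p q r"
      by (rule rep_eqI[OF rep_mu[OF R]])
    then show "mu (cjp \<phi> j1 j2 j3) p q r = Kc 1 1 j2 j3 j1 * cjp \<phi> j1 (j2+1) (j3+1) p q r + Kc 1 (-1) j2 j3 j1 * cjp \<phi> j1 (j2+1) (j3-1) p q r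
      + Kc (-1) 1 j2 j3 j1 * cjp \<phi> j1 (j2-1) (j3+1) p q r + Kc (-1) (-1) j2 j3 j1 * cjp \<phi> j1 (j2-1) (j3-1) p q r" by simp
  qed
qed

lemma main1: "schur_family \<phi> \<Longrightarrow> admissible j1 j2 j3 \<Longrightarrow> x \<notin> {0, 1, -1} \<Longrightarrow> y \<notin> {0, 1, -1} \<Longrightarrow> z \<noteq> 0 \<Longrightarrow>
  H1 (\<phi> j1 j2 j3) x y z = (of_int j1 + 1)^2 * \<phi> j1 j2 j3 x y z"
proof -
  assume sf: "schur_family \<phi>" and a: "admissible j1 j2 j3" and x: "x \<notin> {0, 1, -1}" and y: "y \<notin> {0, 1, -1}" and z: "z \<noteq> 0"
  define C where "C = cjp \<phi> j1 j2 j3"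
  have R: "rep (\<phi> j1 j2 j3) C" using cjp_rep[OF sf, of j1 j2 j3] a unfolding C_def phiz_def by simp
  then obtain M where b: "bnd M C" and e: "eqf M C (\<phi> j1 j2 j3)" unfolding rep_def eqf_def by blast
  have E: "DD C = (\<lambda>p q r. of_int ((j1+1)^2) * C p q r)"
    using eig_all[OF fam_cjp[OF sf] a] unfolding eig_def C_def by (intro ext) simp
  have "H1 (\<phi> j1 j2 j3) x y z = ev (M+2) (DD C) (L x) (L y) (L z)" by (rule H1_ev[OF b e x y z])
  also have "\<dots> = of_int ((j1+1)^2) * ev M C (L x) (L y) (L z)"
  proof -
    have m: "ev (M+2) C s t u = ev M C s t u" for s t u by (rule ev_mono[OF b]) simp
    show ?thesis unfolding E ev_scal m ..
  qed
  also have "\<dots> = (of_int j1 + 1)^2 * \<phi> j1 j2 j3 x y z" using e x y z unfolding eqf_def by simp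
  finally show ?thesis .
qed



definition psi2 :: "(int \<Rightarrow> int \<Rightarrow> int \<Rightarrow> fun3) \<Rightarrow> (int \<Rightarrow> int \<Rightarrow> int \<Rightarrow> fun3)" where
  "psi2 \<phi> k1 k2 k3 x y z = \<phi> k2 k1 k3 x z y"
definition psi3 :: "(int \<Rightarrow> int \<Rightarrow> int \<Rightarrow> fun3) \<Rightarrow> (int \<Rightarrow> int \<Rightarrow> int \<Rightarrow> fun3)" where
  "psi3 \<phi> k1 k2 k3 x y z = \<phi> k2 k3 k1 z x y"

lemma phiz_psi2: "phiz (psi2 \<phi>) k1 k2 k3 x y z = phiz \<phi> k2 k1 k3 x z y"
proof -
  have e: "admissible k2 k1 k3 = admissible k1 k2 k3" by (rule adm_sym12)
  show ?thesis unfolding phiz_def psi2_def e by simp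
qed
lemma phiz_psi3: "phiz (psi3 \<phi>) k1 k2 k3 x y z = phiz \<phi> k2 k3 k1 z x y"
proof -
  have e: "admissible k2 k3 k1 = admissible k1 k2 k3" by (rule adm_cyc)
  show ?thesis unfolding phiz_def psi3_def e by simp
qed

lemma sf_psi2: "schur_family \<phi> \<Longrightarrow> schur_family (psi2 \<phi>)"
proof -
  assume sf: "schur_family \<phi>"
  show ?thesis unfolding schur_family_def
  proof (intro allI impI conjI)
    fix x y z :: complex assume n: "x \<noteq> 0" "y \<noteq> 0" "z \<noteq> 0"
    show "psi2 \<phi> 0 0 0 x y z = 1" unfolding psi2_def using sf_0[OF sf] n by simp
    fix k1 k2 k3 assume a: "admissible k1 k2 k3"
    have a': "admissible k2 k1 k3" using a adm_sym12[of k2 k1 k3] by (simp only:)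
    show "(x + inverse x) * psi2 \<phi> k1 k2 k3 x y z =
      (\<Sum>a\<in>pm. \<Sum>b\<in>pm. Kc a b k1 k2 k3 * phiz (psi2 \<phi>) (k1 + a) (k2 + b) k3 x y z)"
      unfolding psi2_def phiz_psi2 pm_sum add_uminus_conv_diff sf_s[OF sf a' n(1) n(3) n(2), unfolded L_def]
      by (simp only: Kc_sym[of 1 1 k1 k2 k3] Kc_sym[of 1 "-1" k1 k2 k3] Kc_sym[of "-1" 1 k1 k2 k3] Kc_sym[of "-1" "-1" k1 k2 k3] add_ac)
    show "(y + inverse y) * psi2 \<phi> k1 k2 k3 x y z =
      (\<Sum>a\<in>pm. \<Sum>b\<in>pm. Kc a b k1 k3 k2 * phiz (psi2 \<phi>) (k1 + a) k2 (k3 + b) x y z)"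
      unfolding psi2_def phiz_psi2 pm_sum add_uminus_conv_diff sf_u[OF sf a' n(1) n(3) n(2), unfolded L_def]
      by (simp only: add_ac)
    show "(z + inverse z) * psi2 \<phi> k1 k2 k3 x y z =
      (\<Sum>a\<in>pm. \<Sum>b\<in>pm. Kc a b k2 k3 k1 * phiz (psi2 \<phi>) k1 (k2 + a) (k3 + b) x y z)"
      unfolding psi2_def phiz_psi2 pm_sum add_uminus_conv_diff sf_t[OF sf a' n(1) n(3) n(2), unfolded L_def]
      by (simp only: add_ac)
  qed
qed

lemma sf_psi3: "schur_family \<phi> \<Longrightarrow> schur_family (psi3 \<phi>)"
proof -
  assume sf: "schur_family \<phi>"
  show ?thesis unfolding schur_family_def
  proof (intro allI impI conjI)
    fix x y z :: complex assume n: "x \<noteq> 0" "y \<noteq> 0" "z \<noteq> 0"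
    show "psi3 \<phi> 0 0 0 x y z = 1" unfolding psi3_def using sf_0[OF sf] n by simp
    fix k1 k2 k3 assume a: "admissible k1 k2 k3"
    have "admissible k2 k3 k1 = admissible k1 k2 k3" by (rule adm_cyc)
    then have a': "admissible k2 k3 k1" using a by (simp only:)
    show "(x + inverse x) * psi3 \<phi> k1 k2 k3 x y z =
      (\<Sum>a\<in>pm. \<Sum>b\<in>pm. Kc a b k1 k2 k3 * phiz (psi3 \<phi>) (k1 + a) (k2 + b) k3 x y z)"
      unfolding psi3_def phiz_psi3 pm_sum add_uminus_conv_diff sf_t[OF sf a' n(3) n(1) n(2), unfolded L_def]
      by (simp only: Kc_sym[of 1 1 k1 k2 k3] Kc_sym[of 1 "-1" k1 k2 k3] Kc_sym[of "-1" 1 k1 k2 k3] Kc_sym[of "-1" "-1" k1 k2 k3] add_ac)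
    show "(y + inverse y) * psi3 \<phi> k1 k2 k3 x y z =
      (\<Sum>a\<in>pm. \<Sum>b\<in>pm. Kc a b k1 k3 k2 * phiz (psi3 \<phi>) (k1 + a) k2 (k3 + b) x y z)"
      unfolding psi3_def phiz_psi3 pm_sum add_uminus_conv_diff sf_u[OF sf a' n(3) n(1) n(2), unfolded L_def]
      by (simp only: Kc_sym[of 1 1 k1 k3 k2] Kc_sym[of 1 "-1" k1 k3 k2] Kc_sym[of "-1" 1 k1 k3 k2] Kc_sym[of "-1" "-1" k1 k3 k2] add_ac)
    show "(z + inverse z) * psi3 \<phi> k1 k2 k3 x y z =
      (\<Sum>a\<in>pm. \<Sum>b\<in>pm. Kc a b k2 k3 k1 * phiz (psi3 \<phi>) k1 (k2 + a) (k3 + b) x y z)"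
      unfolding psi3_def phiz_psi3 pm_sum add_uminus_conv_diff sf_s[OF sf a' n(3) n(1) n(2), unfolded L_def]
      by (simp only: add_ac)
  qed
qed

lemma H1_psi2: "H1 (psi2 \<phi> k1 k2 k3) x y z = H2 (\<phi> k2 k1 k3) x z y"
  unfolding H1_def H2_def d1_def d2_def d3_def psi2_def ..

lemma H1_psi3: "H1 (psi3 \<phi> k1 k2 k3) x y z = H3 (\<phi> k2 k3 k1) z x y"
  unfolding H1_def H3_def d1_def d2_def d3_def psi3_def ..


theorem mainTheorem7:
  fixes \<phi> :: "int \<Rightarrow> int \<Rightarrow> int \<Rightarrow> complex \<Rightarrow> complex \<Rightarrow> complex \<Rightarrow> complex"
  assumes "schur_family \<phi>"
    and "admissible j1 j2 j3"
    and "i \<in> {1, 2, 3}"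
    and "x12 \<notin> {0, 1, -1}" and "x13 \<notin> {0, 1, -1}" and "x23 \<notin> {0, 1, -1}"
  shows "Hhat i (\<phi> j1 j2 j3) x12 x13 x23
           = (of_int (jsel i j1 j2 j3) + 1)^2 * \<phi> j1 j2 j3 x12 x13 x23"
proof -
  note sf = assms(1) and a = assms(2) and x12 = assms(4) and x13 = assms(5) and x23 = assms(6)
  consider "i = 1" | "i = 2" | "i = 3" using assms(3) by auto
  then show ?thesis
  proof cases
    case 1
    have "H1 (\<phi> j1 j2 j3) x12 x13 x23 = (of_int j1 + 1)^2 * \<phi> j1 j2 j3 x12 x13 x23"
      by (rule main1[OF sf a x12 x13]) (use x23 in auto)
    then show ?thesis using 1 unfolding Hhat_def jsel_def by simp
  next
    case 2
    have a2: "admissible j2 j1 j3" using a adm_sym12[of j2 j1 j3] by (simp only:)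
    have "H1 (psi2 \<phi> j2 j1 j3) x12 x23 x13 = (of_int j2 + 1)^2 * psi2 \<phi> j2 j1 j3 x12 x23 x13"
      by (rule main1[OF sf_psi2[OF sf] a2 x12 x23]) (use x13 in auto)
    then have "H2 (\<phi> j1 j2 j3) x12 x13 x23 = (of_int j2 + 1)^2 * \<phi> j1 j2 j3 x12 x13 x23"
      unfolding H1_psi2 psi2_def .
    then show ?thesis using 2 unfolding Hhat_def jsel_def by simp
  next
    case 3
    have e: "admissible j1 j2 j3 = admissible j3 j1 j2" by (rule adm_cyc)
    have a3: "admissible j3 j1 j2" using a e by (simp only:)
    have "H1 (psi3 \<phi> j3 j1 j2) x13 x23 x12 = (of_int j3 + 1)^2 * psi3 \<phi> j3 j1 j2 x13 x23 x12"
      by (rule main1[OF sf_psi3[OF sf] a3 x13 x23]) (use x12 in auto)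
    then have "H3 (\<phi> j1 j2 j3) x12 x13 x23 = (of_int j3 + 1)^2 * \<phi> j1 j2 j3 x12 x13 x23"
      unfolding H1_psi3 psi3_def .
    then show ?thesis using 3 unfolding Hhat_def jsel_def by simp
  qed
qed

end
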